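(* Let $\mathcal X,\mathcal Y$ be nonempty convex compact sets and $\mathcal L:\mathcal X\times\mathcal Y\to\mathbb R$ a differentiable, uniformly strongly convex-concave function with saddle point $(x^*,y^* )$ and finite curvature constant $C_{\mathcal L}$. Consider either (I) $(x^*,y^* )$ in the relative interior of $\mathcal X\times\mathcal Y$, $\mu^{int}_{\mathcal L}>0$, with $(g_t,\nu,\mu_{\mathcal L}):=(g_t^{FW},\nu^{FW},\mu^{int}_{\mathcal L})$, $\nu^{FW}:=1-\frac{M_{\mathcal L}}{\sqrt{\mu^{int}_{\mathcal L}}}$, the algorithm being SP-FW; or (P) $\mathcal X=\mathrm{conv}(\mathcal A)$, $\mathcal Y=\mathrm{conv}(\mathcal B)$ with $\mathcal A,\mathcal B$ finite, $\mu^A_{\mathcal L}>0$, with $(g_t,\nu,\mu_{\mathcal L}):=(g_t^{PFW},\nu^{PFW},\mu^A_{\mathcal L})$, $\nu^{PFW}:=\frac12-\frac{M_{\mathcal L}}{\sqrt{\mu^A_{\mathcal L}}}$, the algorithm being SP-AFW. Let $w_t:=w(z^{(t)})$ for the iterates of the algorithm with step size $\gamma_t=\min(\gamma_{\max},\frac{\nu}{2C_{\mathcal L}}g_t)$. If $\nu>0$, then at each non-drop step (i.e. when $\gamma_t<\gamma_{\max}$ or $\gamma_{\max}\ge1$), $$w_{t+1}\le(1-\rho_{\mathcal L})w_t,\qquad\rho_{\mathcal L}:=\frac{\nu^2}2\frac{\mu_{\mathcal L}}{C_{\mathcal L}}.$$ Moreover, in case (I) there is no drop step; in case (P) the number of drop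 steps (steps with $\gamma_t=\gamma_{\max}<1$) among the first $t$ iterations is at most $\frac23t$, and at a drop step $w_{t+1}\le w_t$.
   Context: Convex-concave: $\mathcal L(\cdot,y)$ convex, $\mathcal L(x,\cdot)$ concave. Uniformly strongly convex-concave: there are $\mu_{\mathcal X},\mu_{\mathcal Y}>0$ with $\mathcal L(\cdot,y)$ $\mu_{\mathcal X}$-strongly convex for every $y$ and $-\mathcal L(x,\cdot)$ $\mu_{\mathcal Y}$-strongly convex for every $x$. Saddle point: $\mathcal L(x^*,y)\le\mathcal L(x^*,y^* )\le\mathcal L(x,y^* )$ for all $x,y$; $\mathcal L^*:=\mathcal L(x^*,y^* )$. For $z=(x,y)$: $r(z):=(\nabla_x\mathcal L(z),-\nabla_y\mathcal L(z))$, $w(z):=\mathcal L(x,y^* )-\mathcal L(x^*,y)$. Algorithms. SP-FW: from $z^{(0)}$, at iteration $t$: $r^{(t)}:=r(z^{(t)})$, $s^{(t)}\in\arg\min_{s\in\mathcal X\times\mathcal Y}\langle s,r^{(t)}\rangle$, $g_t^{FW}:=\langle z^{(t)}-s^{(t)},r^{(t)}\rangle$, $z^{(t+1)}:=(1-\gamma_t)z^{(t)}+\gamma_ts^{(t)}$; $\gamma_{\max}:=1$. SP-AFW: iterates stored as $x^{(t)}=\sum_{v\in S_x^{(t)}}\alpha_v^{(t)}v$, $y^{(t)}=\sum_{v\in S_y^{(t)}}\alpha^{(t)}_vv$ (positive weights summing to one, active sets $S_x^{(t)}\subseteq\mathcal A,S_y^{(t)}\subseteq\mathcal B$), starting from $z^{(0)}\in\mathcal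 A\times\mathcal B$ with singleton active sets. At iteration $t$: $d_{FW}^{(t)}:=s^{(t)}-z^{(t)}$; $v^{(t)}=(v^{(t)}_x,v^{(t)}_y)\in\arg\max_{v\in S_x^{(t)}\times S_y^{(t)}}\langle r^{(t)},v\rangle$, $d_A^{(t)}:=z^{(t)}-v^{(t)}$; if $\langle-r^{(t)},d^{(t)}_{FW}\rangle\ge\langle-r^{(t)},d^{(t)}_A\rangle$ then $d^{(t)}:=d^{(t)}_{FW}$, $\gamma_{\max}:=1$, else $d^{(t)}:=d^{(t)}_A$, $\gamma_{\max}:=\min\{\frac{\alpha_{v_x^{(t)}}}{1-\alpha_{v_x^{(t)}}},\frac{\alpha_{v_y^{(t)}}}{1-\alpha_{v_y^{(t)}}}\}$; $g_t^{PFW}:=\langle-r^{(t)},d^{(t)}_{FW}+d^{(t)}_A\rangle$; $z^{(t+1)}:=z^{(t)}+\gamma_td^{(t)}$, weights of each block updated accordingly (FW step: multiply by $1-\gamma_t$, add $\gamma_t$ to the FW vertex; away step: multiply by $1+\gamma_t$, subtract $\gamma_t$ from the away vertex), active sets = atoms of positive weight. Constants. $\mathcal F:=\{\mathcal L(\cdot,y):y\in\mathcal Y\}$, $\mathcal G:=\{-\mathcal L(x,\cdot):x\in\mathcal X\}$. Curvature: $C_f:=\sup\frac2{\gamma^2}(f(x+\gamma(s-v))-f(x)-\gamma\langle s-v,\nabla f(x)\rangle)$ over $x,s,v$ in the domain, $\gamma>0$ with $x+\gamma(s-v)$ in the domain; $C_{\mathcal L}:=\frac12(\sup_{f\in\mathcal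 F}C_f+\sup_{g\in\mathcal G}C_g)$. Interior strong convexity of $f$ on $\mathcal K$ w.r.t. $x_c$ in its relative interior: $\mu_f^{x_c}:=\inf\frac2{\gamma^2}(f(u)-f(x)-\langle u-x,\nabla f(x)\rangle)$ over $x\in\mathcal K\setminus\{x_c\}$, $\gamma\in(0,1]$, $u=x+\gamma(s-x)$ where $s$ is where the ray from $x$ through $x_c$ meets the relative boundary of $\mathcal K$; $\mu^{int}_{\mathcal L}:=\min\{\inf_{f\in\mathcal F}\mu_f^{x^*},\inf_{g\in\mathcal G}\mu_g^{y^*}\}$. Geometric strong convexity of $f$ on $\mathcal K=\mathrm{conv}(\mathcal A)$: for $x\in\mathcal K$, $\mathcal S_x$ = family of $S\subseteq\mathcal A$ such that $x$ is a convex combination of all elements of $S$ with positive coefficients, $v_S(x)\in\arg\max_{v\in S}\langle\nabla f(x),v\rangle$, $v_f(x)\in\arg\min\{\langle\nabla f(x),v\rangle:v=v_S(x),S\in\mathcal S_x\}$, $s_f(x)\in\arg\min_{v\in\mathcal A}\langle\nabla f(x),v\rangle$, $\gamma^A(x,x'):=\frac{\langle-\nabla f(x),x'-x\rangle}{\langle-\nabla f(x),s_f(x)-v_f(x)\rangle}$, $\mu^A_f:=\inf_{x\in\mathcal K}\inf_{x':\langle\nabla f(x),x'-x\rangle<0}\frac2{\gamma^A(x,x')^2}(f(x')-f(x)-\langle x'-x,\nabla f(x)\rangle)$; $\mu^A_{\mathcal L}:=\min\{\inf_{f\in\mathcal F}\mu^A_f\text{ (over }\mathcal A),\inf_{g\in\mathcal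 G}\mu^A_g\text{ (over }\mathcal B)\}$. Bilinearity: $M_{XY}:=\sup\langle s-v,\frac{\nabla_x\mathcal L(x,y^* )-\nabla_x\mathcal L(x,y)}{\sqrt{\mathcal L^*-\mathcal L(x^*,y)}}\rangle$ over $y\ne y^*$, $x,s,v\in\mathcal X$; $M_{YX}:=\sup\langle s-v,\frac{\nabla_y\mathcal L(x,y)-\nabla_y\mathcal L(x^*,y)}{\sqrt{\mathcal L(x,y^* )-\mathcal L^*}}\rangle$ over $x\ne x^*$, $y,s,v\in\mathcal Y$; $M_{\mathcal L}:=\max\{M_{XY},M_{YX}\}$. *)

theory Defs
  imports "HOL-Analysis.Analysis"
begin

definition sconvex_on :: "real \<Rightarrow> 'a::real_normed_vector set \<Rightarrow> ('a \<Rightarrow> real) \<Rightarrow> bool" where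
  "sconvex_on \<mu> C f \<longleftrightarrow> (\<forall>x\<in>C. \<forall>y\<in>C. \<forall>t::real. 0 \<le> t \<and> t \<le> 1 \<longrightarrow>
      f ((1 - t) *\<^sub>R x + t *\<^sub>R y) \<le> (1 - t) * f x + t * f y - \<mu> / 2 * t * (1 - t) * (norm (x - y))\<^sup>2)"

section \<open>Saddle-point objects: z = (x,y), gradient grad z = (nabla_x L z, nabla_y L z)\<close>

definition sp_r :: "('a \<times> 'b \<Rightarrow> 'a \<times> 'b) \<Rightarrow> 'a \<times> 'b \<Rightarrow> ('a::real_vector) \<times> ('b::real_vector)" where
  "sp_r grad z = (fst (grad z), - snd (grad z))"

definition sp_w :: "('a \<times> 'b \<Rightarrow> real) \<Rightarrow> 'a \<Rightarrow> 'b \<Rightarrow> 'a \<times> 'b \<Rightarrow> real" where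
  "sp_w L xs ys z = L (fst z, ys) - L (xs, snd z)"

definition curv_set :: "('a::real_inner \<Rightarrow> real) \<Rightarrow> ('a \<Rightarrow> 'a) \<Rightarrow> 'a set \<Rightarrow> real set" where
  "curv_set f df D = {2 / \<gamma>\<^sup>2 * (f (x + \<gamma> *\<^sub>R (s - v)) - f x - \<gamma> * inner (s - v) (df x)) | x s v \<gamma>.
      x \<in> D \<and> s \<in> D \<and> v \<in> D \<and> \<gamma> > 0 \<and> x + \<gamma> *\<^sub>R (s - v) \<in> D}"

definition curv :: "('a::real_inner \<Rightarrow> real) \<Rightarrow> ('a \<Rightarrow> 'a) \<Rightarrow> 'a set \<Rightarrow> real" where
  "curv f df D = Sup (curv_set f df D)"

definition C_L :: "'a::real_inner set \<Rightarrow> 'b::real_inner set \<Rightarrow> ('a \<times> 'b \<Rightarrow> real) \<Rightarrow> ('a \<times> 'b \<Rightarrow> 'a \<times> 'b) \<Rightarrow> real" where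
  "C_L X Y L grad = ((SUP y\<in>Y. curv (\<lambda>x. L (x, y)) (\<lambda>x. fst (grad (x, y))) X)
                   + (SUP x\<in>X. curv (\<lambda>y. - L (x, y)) (\<lambda>y. - snd (grad (x, y))) Y)) / 2"

definition ray_exit :: "'a::real_vector set \<Rightarrow> 'a \<Rightarrow> 'a \<Rightarrow> 'a" where
  "ray_exit K x xc = x + (Sup {l::real. 0 \<le> l \<and> x + l *\<^sub>R (xc - x) \<in> K}) *\<^sub>R (xc - x)"

definition int_sc_set :: "('a::real_inner \<Rightarrow> real) \<Rightarrow> ('a \<Rightarrow> 'a) \<Rightarrow> 'a set \<Rightarrow> 'a \<Rightarrow> real set" where
  "int_sc_set f df K xc = {2 / \<gamma>\<^sup>2 * (f u - f x - inner (u - x) (df x)) | x \<gamma> u.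
      x \<in> K \<and> x \<noteq> xc \<and> 0 < \<gamma> \<and> \<gamma> \<le> 1 \<and> u = x + \<gamma> *\<^sub>R (ray_exit K x xc - x)}"

definition mu_int :: "('a::real_inner \<Rightarrow> real) \<Rightarrow> ('a \<Rightarrow> 'a) \<Rightarrow> 'a set \<Rightarrow> 'a \<Rightarrow> real" where
  "mu_int f df K xc = Inf (int_sc_set f df K xc)"

definition mu_int_L :: "'a::real_inner set \<Rightarrow> 'b::real_inner set \<Rightarrow> ('a \<times> 'b \<Rightarrow> real) \<Rightarrow> ('a \<times> 'b \<Rightarrow> 'a \<times> 'b) \<Rightarrow> 'a \<Rightarrow> 'b \<Rightarrow> real" where
  "mu_int_L X Y L grad xs ys = min (INF y\<in>Y. mu_int (\<lambda>x. L (x, y)) (\<lambda>x. fst (grad (x, y))) X xs)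
                                   (INF x\<in>X. mu_int (\<lambda>y. - L (x, y)) (\<lambda>y. - snd (grad (x, y))) Y ys)"

definition atom_supports :: "'a::real_vector set \<Rightarrow> 'a \<Rightarrow> 'a set set" where
  "atom_supports A x = {S. S \<subseteq> A \<and> (\<exists>\<alpha>. (\<forall>v\<in>S. \<alpha> v > 0) \<and> sum \<alpha> S = 1 \<and> (\<Sum>v\<in>S. \<alpha> v *\<^sub>R v) = x)}"

text \<open>inner g (v_f x) = min over S in S_x of max over v in S of inner g v.\<close>
definition away_val :: "'a::real_inner \<Rightarrow> 'a set \<Rightarrow> 'a \<Rightarrow> real" where
  "away_val g A x = Min ((\<lambda>S. Max ((\<lambda>v. inner g v) ` S)) ` atom_supports A x)"

text \<open>inner g (s_f x) = min over v in A of inner g v.\<close>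
definition fw_val :: "'a::real_inner \<Rightarrow> 'a set \<Rightarrow> real" where
  "fw_val g A = Min ((\<lambda>v. inner g v) ` A)"

definition gammaA :: "('a::real_inner \<Rightarrow> 'a) \<Rightarrow> 'a set \<Rightarrow> 'a \<Rightarrow> 'a \<Rightarrow> real" where
  "gammaA df A x x' = inner (- df x) (x' - x) / (away_val (df x) A x - fw_val (df x) A)"

definition geo_sc_set :: "('a::real_inner \<Rightarrow> real) \<Rightarrow> ('a \<Rightarrow> 'a) \<Rightarrow> 'a set \<Rightarrow> real set" where
  "geo_sc_set f df A = {2 / (gammaA df A x x')\<^sup>2 * (f x' - f x - inner (x' - x) (df x)) | x x'.
      x \<in> convex hull A \<and> x' \<in> convex hull A \<and> inner (df x) (x' - x) < 0}"

definition mu_geo :: "('a::real_inner \<Rightarrow> real) \<Rightarrow> ('a \<Rightarrow> 'a) \<Rightarrow> 'a set \<Rightarrow> real" where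
  "mu_geo f df A = Inf (geo_sc_set f df A)"

definition mu_geo_L :: "'a::real_inner set \<Rightarrow> 'b::real_inner set \<Rightarrow> ('a \<times> 'b \<Rightarrow> real) \<Rightarrow> ('a \<times> 'b \<Rightarrow> 'a \<times> 'b) \<Rightarrow> real" where
  "mu_geo_L A B L grad = min (INF y\<in>convex hull B. mu_geo (\<lambda>x. L (x, y)) (\<lambda>x. fst (grad (x, y))) A)
                             (INF x\<in>convex hull A. mu_geo (\<lambda>y. - L (x, y)) (\<lambda>y. - snd (grad (x, y))) B)"

definition MXY_set :: "'a::real_inner set \<Rightarrow> 'b::real_inner set \<Rightarrow> ('a \<times> 'b \<Rightarrow> real) \<Rightarrow> ('a \<times> 'b \<Rightarrow> 'a \<times> 'b) \<Rightarrow> 'a \<Rightarrow> 'b \<Rightarrow> real set" where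
  "MXY_set X Y L grad xs ys = {inner (s - v) ((fst (grad (x, ys)) - fst (grad (x, y))) /\<^sub>R sqrt (L (xs, ys) - L (xs, y)))
      | y x s v. y \<in> Y \<and> y \<noteq> ys \<and> x \<in> X \<and> s \<in> X \<and> v \<in> X}"

definition MYX_set :: "'a::real_inner set \<Rightarrow> 'b::real_inner set \<Rightarrow> ('a \<times> 'b \<Rightarrow> real) \<Rightarrow> ('a \<times> 'b \<Rightarrow> 'a \<times> 'b) \<Rightarrow> 'a \<Rightarrow> 'b \<Rightarrow> real set" where
  "MYX_set X Y L grad xs ys = {inner (s - v) ((snd (grad (x, y)) - snd (grad (xs, y))) /\<^sub>R sqrt (L (x, ys) - L (xs, ys)))
      | x y s v. x \<in> X \<and> x \<noteq> xs \<and> y \<in> Y \<and> s \<in> Y \<and> v \<in> Y}"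

definition M_L :: "'a::real_inner set \<Rightarrow> 'b::real_inner set \<Rightarrow> ('a \<times> 'b \<Rightarrow> real) \<Rightarrow> ('a \<times> 'b \<Rightarrow> 'a \<times> 'b) \<Rightarrow> 'a \<Rightarrow> 'b \<Rightarrow> real" where
  "M_L X Y L grad xs ys = max (Sup (MXY_set X Y L grad xs ys)) (Sup (MYX_set X Y L grad xs ys))"

definition spfw_run :: "'a::real_inner set \<Rightarrow> 'b::real_inner set \<Rightarrow> ('a \<times> 'b \<Rightarrow> 'a \<times> 'b) \<Rightarrow> real \<Rightarrow> real
    \<Rightarrow> (nat \<Rightarrow> 'a \<times> 'b) \<Rightarrow> (nat \<Rightarrow> 'a \<times> 'b) \<Rightarrow> bool" where
  "spfw_run X Y grad \<nu> C z s \<longleftrightarrow> z 0 \<in> X \<times> Y \<and>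
     (\<forall>t. let r = sp_r grad (z t);
              g = inner (z t - s t) r;
              \<gamma> = min 1 (\<nu> / (2 * C) * g)
          in s t \<in> X \<times> Y \<and> (\<forall>s'\<in>X \<times> Y. inner (s t) r \<le> inner s' r) \<and>
             z (Suc t) = (1 - \<gamma>) *\<^sub>R z t + \<gamma> *\<^sub>R s t)"

definition away_ratio :: "real \<Rightarrow> ereal" where
  "away_ratio a = (if a < 1 then ereal (a / (1 - a)) else \<infinity>)"

text \<open>SP-AFW run: z iterates, ax/ay weights, s FW vertex, v away vertex, gam step size,
  gmax maximal step size.\<close>
definition spafw_run :: "'a::real_inner set \<Rightarrow> 'b::real_inner set \<Rightarrow> ('a \<times> 'b \<Rightarrow> 'a \<times> 'b) \<Rightarrow> real \<Rightarrow> real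
    \<Rightarrow> (nat \<Rightarrow> 'a \<times> 'b) \<Rightarrow> (nat \<Rightarrow> 'a \<Rightarrow> real) \<Rightarrow> (nat \<Rightarrow> 'b \<Rightarrow> real)
    \<Rightarrow> (nat \<Rightarrow> 'a \<times> 'b) \<Rightarrow> (nat \<Rightarrow> 'a \<times> 'b) \<Rightarrow> (nat \<Rightarrow> real) \<Rightarrow> (nat \<Rightarrow> real) \<Rightarrow> bool" where
  "spafw_run A B grad \<nu> C z ax ay s v gam gmax \<longleftrightarrow>
     fst (z 0) \<in> A \<and> snd (z 0) \<in> B \<and>
     ax 0 = (\<lambda>a. if a = fst (z 0) then 1 else 0) \<and>
     ay 0 = (\<lambda>b. if b = snd (z 0) then 1 else 0) \<and>
     (\<forall>t. let r = sp_r grad (z t);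
              Sx = {a\<in>A. ax t a > 0};
              Sy = {b\<in>B. ay t b > 0};
              dFW = s t - z t;
              dA = z t - v t;
              isFW = (inner (- r) dFW \<ge> inner (- r) dA);
              g = inner (- r) (dFW + dA)
          in s t \<in> A \<times> B \<and> (\<forall>s'\<in>(convex hull A) \<times> (convex hull B). inner (s t) r \<le> inner s' r) \<and>
             v t \<in> Sx \<times> Sy \<and> (\<forall>v'\<in>Sx \<times> Sy. inner r v' \<le> inner r (v t)) \<and>
             gmax t = (if isFW then 1
                       else real_of_ereal (min (away_ratio (ax t (fst (v t)))) (away_ratio (ay t (snd (v t)))))) \<and>
             gam t = min (gmax t) (\<nu> / (2 * C) * g) \<and>
             z (Suc t) = z t + gam t *\<^sub>R (if isFW then dFW else dA) \<and>
             ax (Suc t) = (if isFW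
                           then (\<lambda>a. (1 - gam t) * ax t a + (if a = fst (s t) then gam t else 0))
                           else (\<lambda>a. (1 + gam t) * ax t a - (if a = fst (v t) then gam t else 0))) \<and>
             ay (Suc t) = (if isFW
                           then (\<lambda>b. (1 - gam t) * ay t b + (if b = snd (s t) then gam t else 0))
                           else (\<lambda>b. (1 + gam t) * ay t b - (if b = snd (v t) then gam t else 0))))"

end

theory Submission
  imports Defs
begin

lemma rate_a:
  fixes w w' g \<nu> C \<mu> \<gamma> :: real
  assumes C: "C > 0" and st: "w' \<le> w - \<nu> * \<gamma> * g + \<gamma>\<^sup>2 * C" and ga: "\<gamma> = \<nu> / (2 * C) * g"
    and gw: "2 * \<mu> * w \<le> g\<^sup>2"
  shows "w' \<le> (1 - \<nu>\<^sup>2 / 2 * (\<mu> / C)) * w"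
proof -
  have e1: "\<nu> * \<gamma> * g - \<gamma>\<^sup>2 * C = \<nu>\<^sup>2 * g\<^sup>2 / (4 * C)" unfolding ga using C by (simp add: field_simps power2_eq_square)
  have e2: "\<nu>\<^sup>2 / 2 * (\<mu> / C) * w = \<nu>\<^sup>2 * (2 * \<mu> * w) / (4 * C)" using C by (simp add: field_simps)
  have "\<nu>\<^sup>2 * (2 * \<mu> * w) / (4 * C) \<le> \<nu>\<^sup>2 * g\<^sup>2 / (4 * C)"
    using C gw by (intro divide_right_mono mult_left_mono) auto
  moreover have f1: "(1 - \<nu>\<^sup>2 / 2 * (\<mu> / C)) * w = w - \<nu>\<^sup>2 / 2 * (\<mu> / C) * w" by (simp add: left_diff_distrib)
  ultimately show ?thesis unfolding f1 using st e1 e2 by linarith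
qed

lemma rate_b:
  fixes w w' g \<nu> C \<mu> c :: real
  assumes C: "C > 0" and nu: "0 < \<nu>" "\<nu> \<le> 1" and mu: "0 \<le> \<mu>" "\<mu> \<le> 2 * C" and c: "0 \<le> c" "c \<le> 1"
    and wb: "w \<le> c * g - c\<^sup>2 * \<mu> / 2" and big: "2 * C \<le> \<nu> * g" and st: "w' \<le> w - \<nu> * g + C"
  shows "w' \<le> (1 - \<nu>\<^sup>2 / 2 * (\<mu> / C)) * w"
proof -
  define q where "q = \<nu> * \<mu> * c"
  have q0: "0 \<le> q" using nu mu c unfolding q_def by simp
  have "q \<le> 1 * \<mu> * 1" unfolding q_def using nu mu c by (intro mult_mono) auto
  hence q2: "q \<le> 2 * C" using mu by simp
  have h1: "2 * C * (2 * C - q) \<le> \<nu> * g * (2 * C - q)" using big q2 by (intro mult_right_mono) auto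
  have rho0: "0 \<le> \<nu>\<^sup>2 / 2 * (\<mu> / C)" using C mu by simp
  have r1: "\<nu>\<^sup>2 / 2 * (\<mu> / C) * w \<le> \<nu>\<^sup>2 / 2 * (\<mu> / C) * (c * g - c\<^sup>2 * \<mu> / 2)"
    using mult_left_mono[OF wb rho0] .
  have e: "2 * C * (\<nu>\<^sup>2 / 2 * (\<mu> / C) * (c * g - c\<^sup>2 * \<mu> / 2)) = \<nu> * g * q - q\<^sup>2 / 2"
    unfolding q_def using C by (simp add: field_simps power2_eq_square)
  have "\<nu> * g * q - q\<^sup>2 / 2 \<le> 2 * C * (\<nu> * g - C)"
  proof -
    have "0 \<le> (2 * C - q)\<^sup>2 / 2" by simp
    moreover have "(2 * C - q)\<^sup>2 / 2 = 2 * C * (2 * C - q) - 2 * C * C + q\<^sup>2 / 2" by (simp add: power2_eq_square field_simps)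
    ultimately show ?thesis using h1 by (simp add: algebra_simps power2_eq_square)
  qed
  hence "2 * C * (\<nu>\<^sup>2 / 2 * (\<mu> / C) * (c * g - c\<^sup>2 * \<mu> / 2)) \<le> 2 * C * (\<nu> * g - C)" using e by simp
  hence "\<nu>\<^sup>2 / 2 * (\<mu> / C) * (c * g - c\<^sup>2 * \<mu> / 2) \<le> \<nu> * g - C"
    by (rule mult_left_le_imp_le) (use C in auto)
  moreover have f1: "(1 - \<nu>\<^sup>2 / 2 * (\<mu> / C)) * w = w - \<nu>\<^sup>2 / 2 * (\<mu> / C) * w" by (simp add: left_diff_distrib)
  ultimately show ?thesis unfolding f1 using r1 st by linarith
qed

lemma rate_c:
  fixes w w' g \<nu> C \<mu> c \<gamma> :: real
  assumes C: "C > 0" and nu: "0 < \<nu>" "\<nu> \<le> 1/2" and mu: "0 \<le> \<mu>" "\<mu> \<le> 2 * C" and c: "0 \<le> c" "c \<le> 1"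
    and wb: "w \<le> c * g - c\<^sup>2 * \<mu> / 2" and g1: "1 \<le> \<gamma>" and g2: "\<gamma> \<le> \<nu> / (2 * C) * g" and g0: "0 \<le> g"
    and st: "w' \<le> w - \<nu> * \<gamma> * g + \<gamma>\<^sup>2 * C"
  shows "w' \<le> (1 - \<nu>\<^sup>2 / 2 * (\<mu> / C)) * w"
proof -
  have "\<gamma> * C \<le> \<nu> * g / 2" using g2 C by (simp add: field_simps)
  hence "\<gamma> * (\<gamma> * C) \<le> \<gamma> * (\<nu> * g / 2)" using g1 by (intro mult_left_mono) auto
  hence a: "\<gamma>\<^sup>2 * C \<le> \<gamma> * (\<nu> * g / 2)" by (simp add: power2_eq_square algebra_simps)
  have b: "1 * (\<nu> * g / 2) \<le> \<gamma> * (\<nu> * g / 2)" using g1 nu g0 by (intro mult_right_mono) auto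
  have w1: "w' \<le> w - \<nu> * g / 2" using st a b by (simp add: algebra_simps)
  have rho0: "0 \<le> \<nu>\<^sup>2 / 2 * (\<mu> / C)" using C mu by simp
  have r1: "\<nu>\<^sup>2 / 2 * (\<mu> / C) * w \<le> \<nu>\<^sup>2 / 2 * (\<mu> / C) * (c * g - c\<^sup>2 * \<mu> / 2)"
    using mult_left_mono[OF wb rho0] .
  have r2: "\<nu>\<^sup>2 / 2 * (\<mu> / C) * (c\<^sup>2 * \<mu> / 2) \<ge> 0" using rho0 mu by simp
  have "\<nu> * \<mu> * c \<le> (1/2) * (2 * C) * 1" using nu mu c by (intro mult_mono) auto
  hence "\<nu> * g * (\<nu> * \<mu> * c) \<le> \<nu> * g * C" using nu g0 by (intro mult_left_mono) auto
  moreover have "\<nu>\<^sup>2 / 2 * (\<mu> / C) * (c * g) = \<nu> * g * (\<nu> * \<mu> * c) / (2 * C)" using C by (simp add: field_simps power2_eq_square)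
  ultimately have "\<nu>\<^sup>2 / 2 * (\<mu> / C) * (c * g) \<le> \<nu> * g * C / (2 * C)" using C
    by (metis divide_right_mono less_eq_real_def mult_pos_pos zero_less_numeral)
  also have "\<dots> = \<nu> * g / 2" using C by simp
  finally have "\<nu>\<^sup>2 / 2 * (\<mu> / C) * (c * g) \<le> \<nu> * g / 2" .
  moreover have f1: "(1 - \<nu>\<^sup>2 / 2 * (\<mu> / C)) * w = w - \<nu>\<^sup>2 / 2 * (\<mu> / C) * w" by (simp add: left_diff_distrib)
  moreover have f2: "\<nu>\<^sup>2 / 2 * (\<mu> / C) * (c * g - c\<^sup>2 * \<mu> / 2) = \<nu>\<^sup>2 / 2 * (\<mu> / C) * (c * g) - \<nu>\<^sup>2 / 2 * (\<mu> / C) * (c\<^sup>2 * \<mu> / 2)"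
    by (simp add: right_diff_distrib)
  ultimately show ?thesis using r1 r2 w1 by linarith
qed

lemma rate_drop:
  fixes w w' g \<nu> C \<gamma> :: real
  assumes C: "C > 0" and g0: "0 \<le> \<gamma>" and g2: "\<gamma> \<le> \<nu> / (2 * C) * g" and nu: "0 \<le> \<nu>" and gg: "0 \<le> g"
    and st: "w' \<le> w - \<nu> * \<gamma> * g + \<gamma>\<^sup>2 * C"
  shows "w' \<le> w"
proof -
  have "\<gamma> * C \<le> \<nu> * g / 2" using g2 C by (simp add: field_simps)
  hence "\<gamma> * (\<gamma> * C) \<le> \<gamma> * (\<nu> * g / 2)" using g0 by (intro mult_left_mono) auto
  hence a: "\<gamma>\<^sup>2 * C \<le> \<gamma> * (\<nu> * g / 2)" by (simp add: power2_eq_square algebra_simps)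
  have "0 \<le> \<gamma> * (\<nu> * g / 2)" using g0 nu gg by simp
  thus ?thesis using st a by (simp add: algebra_simps)
qed

lemma quad_gap: fixes c g \<mu> :: real assumes "\<mu> > 0" shows "2 * \<mu> * (c * g - c\<^sup>2 * \<mu> / 2) \<le> g\<^sup>2"
proof -
  have "0 \<le> (g - c * \<mu>)\<^sup>2" by simp
  thus ?thesis by (simp add: power2_eq_square algebra_simps)
qed

lemma sq_sum_le: fixes x y :: real shows "(x + y)\<^sup>2 \<le> 2 * (x\<^sup>2 + y\<^sup>2)"
proof -
  have "0 \<le> (x - y)\<^sup>2" by simp
  thus ?thesis by (simp add: power2_eq_square algebra_simps)
qed

lemma S_bound:
  fixes a b w g \<mu> :: real
  assumes a: "0 \<le> a" and b: "0 \<le> b" and w: "w = a + b" and gw: "2 * \<mu> * w \<le> g\<^sup>2" and g: "0 \<le> g" and mu: "0 < \<mu>"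
  shows "(sqrt a + sqrt b) * sqrt \<mu> \<le> g"
proof -
  have h: "(sqrt a + sqrt b)\<^sup>2 \<le> 2 * (a + b)"
    using sq_sum_le[of "sqrt a" "sqrt b"] a b by simp
  have e: "((sqrt a + sqrt b) * sqrt \<mu>)\<^sup>2 = (sqrt a + sqrt b)\<^sup>2 * \<mu>" using mu by (simp add: power_mult_distrib)
  have "(sqrt a + sqrt b)\<^sup>2 * \<mu> \<le> 2 * (a + b) * \<mu>" by (rule mult_right_mono[OF h]) (use mu in simp)
  also have "\<dots> = 2 * \<mu> * w" using w by simp
  finally have "((sqrt a + sqrt b) * sqrt \<mu>)\<^sup>2 \<le> g\<^sup>2" unfolding e using gw by linarith
  thus ?thesis using g by (rule power2_le_imp_le)
qed

lemma combine_blocks: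
  fixes a b gx gy \<mu> c1 c2 :: real
  assumes "0 \<le> gx" "0 \<le> gy" "0 \<le> \<mu>" "0 \<le> c1" "c1 \<le> 1" "0 \<le> c2" "c2 \<le> 1"
    "a \<le> c1 * gx - c1\<^sup>2 * \<mu> / 2" "b \<le> c2 * gy - c2\<^sup>2 * \<mu> / 2"
  shows "\<exists>c. 0 \<le> c \<and> c \<le> 1 \<and> a + b \<le> c * (gx + gy) - c\<^sup>2 * \<mu> / 2"
proof (cases "c1 \<le> c2")
  case True
  have "c1 * gx \<le> c2 * gx" using True assms(1) by (rule mult_right_mono)
  moreover have "0 \<le> c1\<^sup>2 * \<mu>" using assms(3) by simp
  ultimately have "a + b \<le> c2 * (gx + gy) - c2\<^sup>2 * \<mu> / 2" using assms(8,9) by (simp add: algebra_simps)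
  thus ?thesis using assms(6,7) by blast
next
  case False
  have "c2 * gy \<le> c1 * gy" using False assms(2) by (intro mult_right_mono) auto
  moreover have "0 \<le> c2\<^sup>2 * \<mu>" using assms(3) by simp
  ultimately have "a + b \<le> c1 * (gx + gy) - c1\<^sup>2 * \<mu> / 2" using assms(8,9) by (simp add: algebra_simps)
  thus ?thesis using assms(4,5) by blast
qed



lemma supp_Max_ge:
  fixes A :: "'c::real_inner set"
  assumes A: "finite A" and S: "S \<in> atom_supports A x"
  shows "finite S" "S \<noteq> {}" "inner g x \<le> Max ((\<lambda>v. inner g v) ` S)"
proof -
  obtain \<alpha> where al: "S \<subseteq> A" "\<forall>v\<in>S. \<alpha> v > 0" "sum \<alpha> S = 1" "(\<Sum>v\<in>S. \<alpha> v *\<^sub>R v) = x"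
    using S unfolding atom_supports_def by blast
  show fS: "finite S" using al(1) A by (rule finite_subset)
  show ne: "S \<noteq> {}" using al(3) by auto
  have "inner g x = (\<Sum>v\<in>S. \<alpha> v * inner g v)" unfolding al(4)[symmetric] by (simp add: inner_sum_right)
  also have "\<dots> \<le> (\<Sum>v\<in>S. \<alpha> v * Max ((\<lambda>v. inner g v) ` S))"
    using al(2) fS by (intro sum_mono mult_left_mono) auto
  also have "\<dots> = Max ((\<lambda>v. inner g v) ` S)" by (simp add: sum_distrib_right[symmetric] al(3))
  finally show "inner g x \<le> Max ((\<lambda>v. inner g v) ` S)" .
qed

lemma hull_support:
  fixes A :: "'c::real_inner set"
  assumes A: "finite A" and that: "\<forall>a\<in>A. 0 \<le> u a" "sum u A = 1" "(\<Sum>a\<in>A. u a *\<^sub>R a) = x"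
  shows "{a\<in>A. 0 < u a} \<in> atom_supports A x"
proof -
  have s1: "sum u {a\<in>A. 0 < u a} = 1"
    using that A by (subst sum.mono_neutral_left[of A]) (auto simp: less_le)
  have s2: "(\<Sum>a\<in>{a\<in>A. 0 < u a}. u a *\<^sub>R a) = x"
    using that A by (subst sum.mono_neutral_left[of A]) (auto simp: less_le)
  show ?thesis unfolding atom_supports_def using s1 s2 by blast
qed

lemma supports_ne:
  fixes A :: "'c::real_inner set"
  assumes A: "finite A" and x: "x \<in> convex hull A"
  shows "atom_supports A x \<noteq> {}" "finite (atom_supports A x)"
proof -
  obtain u where "\<forall>a\<in>A. 0 \<le> u a" "sum u A = 1" "(\<Sum>a\<in>A. u a *\<^sub>R a) = x"
    using x unfolding convex_hull_finite[OF A] by blast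
  thus "atom_supports A x \<noteq> {}" using hull_support[OF A] by blast
  have "atom_supports A x \<subseteq> Pow A" unfolding atom_supports_def by auto
  thus "finite (atom_supports A x)" using A by (meson finite_Pow_iff finite_subset)
qed

lemma away_ge:
  fixes A :: "'c::real_inner set"
  assumes A: "finite A" and x: "x \<in> convex hull A"
  shows "inner g x \<le> away_val g A x"
  unfolding away_val_def using supports_ne[OF A x] supp_Max_ge[OF A]
  by (subst Min_ge_iff) auto

lemma away_le:
  fixes A :: "'c::real_inner set"
  assumes A: "finite A" and S: "S \<in> atom_supports A x" and vv: "vv \<in> S" and mx: "\<forall>a\<in>S. inner g a \<le> inner g vv"
  shows "away_val g A x \<le> inner g vv"
proof -
  have "atom_supports A x \<subseteq> Pow A" unfolding atom_supports_def by auto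
  hence fA: "finite (atom_supports A x)" using A by (meson finite_Pow_iff finite_subset)
  have "Max ((\<lambda>v. inner g v) ` S) = inner g vv"
    using supp_Max_ge(1)[OF A S] vv mx by (intro Max_eqI) auto
  moreover have "away_val g A x \<le> Max ((\<lambda>v. inner g v) ` S)"
    unfolding away_val_def using fA S by (intro Min_le) auto
  ultimately show ?thesis by simp
qed

lemma fw_le:
  fixes A :: "'c::real_inner set"
  assumes A: "finite A" and xc: "xc \<in> convex hull A"
  shows "fw_val g A \<le> inner g xc"
proof -
  obtain u where u: "\<forall>a\<in>A. 0 \<le> u a" "sum u A = 1" "(\<Sum>a\<in>A. u a *\<^sub>R a) = xc"
    using xc unfolding convex_hull_finite[OF A] by blast
  have ne: "A \<noteq> {}" using u(2) by auto
  have "fw_val g A = (\<Sum>a\<in>A. u a * fw_val g A)" by (simp add: sum_distrib_right[symmetric] u(2))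
  also have "\<dots> \<le> (\<Sum>a\<in>A. u a * inner g a)"
    using u(1) A ne unfolding fw_val_def by (intro sum_mono mult_left_mono) auto
  also have "\<dots> = inner g xc" unfolding u(3)[symmetric] by (simp add: inner_sum_right)
  finally show ?thesis .
qed

lemma fw_ge:
  fixes A :: "'c::real_inner set"
  assumes A: "finite A" "A \<noteq> {}" and lmo: "\<forall>a\<in>A. inner g ss \<le> inner g a"
  shows "inner g ss \<le> fw_val g A"
  unfolding fw_val_def using A lmo by (subst Min_ge_iff) auto

lemma fw_attained:
  fixes A :: "'c::real_inner set"
  assumes A: "finite A" "A \<noteq> {}"
  shows "\<exists>sf\<in>A. fw_val g A = inner g sf \<and> (\<forall>a\<in>A. inner g sf \<le> inner g a)"
proof -
  have "fw_val g A \<in> (\<lambda>v. inner g v) ` A" unfolding fw_val_def using A by (intro Min_in) auto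
  then obtain sf where sf: "sf \<in> A" "fw_val g A = inner g sf" by auto
  moreover have "\<forall>a\<in>A. inner g sf \<le> inner g a"
    using sf A unfolding fw_val_def by (metis Min_le finite_imageI image_eqI)
  ultimately show ?thesis by blast
qed


lemma geosc_gen:
  fixes F :: "'p \<Rightarrow> 'c::real_inner \<Rightarrow> real"
  assumes bd: "bdd_below (\<Union>p\<in>P. geo_sc_set (F p) (dF p) A)" and p: "p \<in> P"
  shows "(INF p\<in>P. mu_geo (F p) (dF p) A) \<le> mu_geo (F p) (dF p) A"
    and "\<And>e. e \<in> geo_sc_set (F p) (dF p) A \<Longrightarrow> mu_geo (F p) (dF p) A \<le> e"
proof -
  obtain B where B: "\<And>u. u \<in> (\<Union>p\<in>P. geo_sc_set (F p) (dF p) A) \<Longrightarrow> B \<le> u" using bd by (auto simp: bdd_below_def)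
  have bS: "bdd_below (geo_sc_set (F p') (dF p') A)" if "p' \<in> P" for p'
    using bd that by (meson UN_upper bdd_below_mono)
  show "mu_geo (F p) (dF p) A \<le> e" if "e \<in> geo_sc_set (F p) (dF p) A" for e
    unfolding mu_geo_def by (rule cInf_lower[OF that bS[OF p]])
  have "bdd_below ((\<lambda>p. mu_geo (F p) (dF p) A) ` P)"
  proof (rule bdd_belowI[of _ "min B (Inf {})"])
    fix u assume "u \<in> (\<lambda>p. mu_geo (F p) (dF p) A) ` P"
    then obtain p' where p': "p' \<in> P" "u = mu_geo (F p') (dF p') A" by auto
    show "min B (Inf {}) \<le> u"
    proof (cases "geo_sc_set (F p') (dF p') A = {}")
      case True thus ?thesis using p' unfolding mu_geo_def by simp
    next
      case False
      hence "B \<le> u" unfolding p'(2) mu_geo_def by (intro cInf_greatest) (use B p' in auto)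
      thus ?thesis by simp
    qed
  qed
  thus "(INF p\<in>P. mu_geo (F p) (dF p) A) \<le> mu_geo (F p) (dF p) A" by (rule cINF_lower[OF _ p])
qed

lemma geo_block_gen:
  fixes F :: "'p \<Rightarrow> 'c::real_inner \<Rightarrow> real"
  assumes A: "finite A" and bd: "bdd_below (\<Union>p\<in>P. geo_sc_set (F p) (dF p) A)" and p: "p \<in> P"
    and x: "x \<in> convex hull A" and xc: "xc \<in> convex hull A"
    and m: "m \<le> (INF p\<in>P. mu_geo (F p) (dF p) A)"
    and tan: "F p x + inner (xc - x) (dF p x) \<le> F p xc"
    and S: "S \<in> atom_supports A x" and vv: "vv \<in> S" and mx: "\<forall>a\<in>S. inner (dF p x) a \<le> inner (dF p x) vv"
    and ss: "\<forall>a\<in>A. inner (dF p x) ss \<le> inner (dF p x) a"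
  shows "\<exists>c. 0 \<le> c \<and> c \<le> 1 \<and> F p x - F p xc \<le> c * inner (dF p x) (vv - ss) - c\<^sup>2 * m / 2"
proof (cases "inner (dF p x) (xc - x) < 0")
  case False
  hence "F p x - F p xc \<le> 0 * inner (dF p x) (vv - ss) - 0\<^sup>2 * m / 2" using tan by (simp add: inner_commute)
  thus ?thesis by (intro exI[of _ 0]) auto
next
  case True
  let ?g = "dF p x"
  define D where "D = away_val ?g A x - fw_val ?g A"
  have Ane: "A \<noteq> {}" using x by auto
  have D1: "inner ?g x - inner ?g xc \<le> D" unfolding D_def using away_ge[OF A x, of ?g] fw_le[OF A xc, of ?g] by linarith
  have D2: "D \<le> inner ?g vv - inner ?g ss" unfolding D_def using away_le[OF A S vv mx] fw_ge[OF A Ane ss] by linarith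
  have Dp: "0 < D" using D1 True by (simp add: inner_diff_right)
  define c where "c = inner (- ?g) (xc - x) / D"
  have c: "0 < c" "c \<le> 1" unfolding c_def using Dp True D1 by (auto simp: inner_diff_right field_simps)
  have gam: "gammaA (dF p) A x xc = c" unfolding gammaA_def c_def D_def ..
  have "2 / (gammaA (dF p) A x xc)\<^sup>2 * (F p xc - F p x - inner (xc - x) (dF p x)) \<in> geo_sc_set (F p) (dF p) A"
    unfolding geo_sc_set_def using x xc True by blast
  hence "mu_geo (F p) (dF p) A \<le> 2 / c\<^sup>2 * (F p xc - F p x - inner (xc - x) ?g)"
    using geosc_gen(2)[OF bd p] gam by simp
  hence "m \<le> 2 / c\<^sup>2 * (F p xc - F p x - inner (xc - x) ?g)" using m geosc_gen(1)[OF bd p] by linarith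
  hence "c\<^sup>2 / 2 * m \<le> c\<^sup>2 / 2 * (2 / c\<^sup>2 * (F p xc - F p x - inner (xc - x) ?g))"
    by (rule mult_left_mono) simp
  also have "\<dots> = F p xc - F p x - inner (xc - x) ?g" using c by simp
  finally have E: "c\<^sup>2 / 2 * m \<le> F p xc - F p x - inner (xc - x) ?g" .
  have "inner (xc - x) ?g = - (c * D)" unfolding c_def using Dp by (simp add: inner_commute)
  moreover have "c * D \<le> c * (inner ?g vv - inner ?g ss)" using D2 c by (intro mult_left_mono) auto
  ultimately have "F p x - F p xc \<le> c * inner ?g (vv - ss) - c\<^sup>2 * m / 2" using E by (simp add: inner_diff_right algebra_simps)
  thus ?thesis using c by (intro exI[of _ c]) auto
qed


definition wvalid :: "'c set \<Rightarrow> ('c \<Rightarrow> real) \<Rightarrow> 'c::real_vector \<Rightarrow> bool" where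
  "wvalid A \<alpha> x \<longleftrightarrow> (\<forall>a. 0 \<le> \<alpha> a) \<and> (\<forall>a. a \<notin> A \<longrightarrow> \<alpha> a = 0) \<and> sum \<alpha> A = 1 \<and> x = (\<Sum>a\<in>A. \<alpha> a *\<^sub>R a)"

lemma wv_hull: assumes A: "finite A" and w: "wvalid A \<alpha> x" shows "x \<in> convex hull A"
proof -
  have "(\<forall>a\<in>A. 0 \<le> \<alpha> a) \<and> sum \<alpha> A = 1 \<and> (\<Sum>a\<in>A. \<alpha> a *\<^sub>R a) = x" using w unfolding wvalid_def by simp
  thus ?thesis unfolding convex_hull_finite[OF A] by blast
qed

lemma wv_le1: assumes "finite A" "wvalid A \<alpha> x" shows "\<alpha> a \<le> 1"
proof (cases "a \<in> A")
  case True
  have "\<alpha> a \<le> sum \<alpha> A" using assms True unfolding wvalid_def by (intro member_le_sum) auto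
  thus ?thesis using assms unfolding wvalid_def by simp
next
  case False thus ?thesis using assms unfolding wvalid_def by simp
qed

lemma wv_supp: fixes A :: "'c::real_inner set" assumes A: "finite A" and w: "wvalid A \<alpha> x" shows "{a\<in>A. 0 < \<alpha> a} \<in> atom_supports A x"
proof -
  have "\<forall>a\<in>A. 0 \<le> \<alpha> a" "sum \<alpha> A = 1" "(\<Sum>a\<in>A. \<alpha> a *\<^sub>R a) = x" using w unfolding wvalid_def by simp_all
  thus ?thesis by (rule hull_support[OF A])
qed

lemma wv_ne: assumes "wvalid A \<alpha> x" shows "{a\<in>A. 0 < \<alpha> a} \<noteq> {}"
proof
  assume "{a\<in>A. 0 < \<alpha> a} = {}"
  hence "\<forall>a\<in>A. \<not> 0 < \<alpha> a" by blast
  hence "\<forall>a\<in>A. \<alpha> a = 0" using assms unfolding wvalid_def by (simp add: not_less order_antisym)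
  thus False using assms unfolding wvalid_def by simp
qed

lemma wv_inner_le:
  fixes g :: "'c::real_inner"
  assumes A: "finite A" and w: "wvalid A \<alpha> x" and mx: "\<forall>a\<in>{a\<in>A. 0 < \<alpha> a}. inner g a \<le> inner g vv"
  shows "inner g x \<le> inner g vv"
proof -
  have "inner g x = (\<Sum>a\<in>A. \<alpha> a * inner g a)" using w unfolding wvalid_def by (simp add: inner_sum_right)
  also have "\<dots> \<le> (\<Sum>a\<in>A. \<alpha> a * inner g vv)"
  proof (rule sum_mono)
    fix a assume a: "a \<in> A"
    show "\<alpha> a * inner g a \<le> \<alpha> a * inner g vv"
    proof (cases "\<alpha> a = 0")
      case False
      hence "0 < \<alpha> a" using w unfolding wvalid_def by (simp add: less_le)
      thus ?thesis using mx a by (intro mult_left_mono) auto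
    qed simp
  qed
  also have "\<dots> = inner g vv" using w unfolding wvalid_def by (simp add: sum_distrib_right[symmetric])
  finally show ?thesis .
qed

lemma wv_one:
  assumes A: "finite A" and w: "wvalid A \<alpha> x" and v: "v \<in> A" and one: "\<alpha> v = 1"
  shows "x = v"
proof -
  have "sum \<alpha> A = \<alpha> v + sum \<alpha> (A - {v})" using A v by (simp add: sum.remove)
  hence "sum \<alpha> (A - {v}) = 0" using w one unfolding wvalid_def by simp
  hence z: "\<forall>a\<in>A - {v}. \<alpha> a = 0" using A w unfolding wvalid_def by (subst (asm) sum_nonneg_eq_0_iff) auto
  have "x = \<alpha> v *\<^sub>R v + (\<Sum>a\<in>A - {v}. \<alpha> a *\<^sub>R a)" using w A v unfolding wvalid_def by (simp add: sum.remove)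
  also have "(\<Sum>a\<in>A - {v}. \<alpha> a *\<^sub>R a) = 0" using z by simp
  finally show ?thesis using one by simp
qed

lemma wv_fw:
  assumes A: "finite A" and w: "wvalid A \<alpha> x" and s: "s \<in> A" and g: "0 \<le> \<gamma>" "\<gamma> \<le> 1"
  shows "wvalid A (\<lambda>a. (1 - \<gamma>) * \<alpha> a + (if a = s then \<gamma> else 0)) (x + \<gamma> *\<^sub>R (s - x))"
proof -
  have a1: "\<forall>a. 0 \<le> (1 - \<gamma>) * \<alpha> a + (if a = s then \<gamma> else 0)" using w g unfolding wvalid_def by auto
  have a2: "\<forall>a. a \<notin> A \<longrightarrow> (1 - \<gamma>) * \<alpha> a + (if a = s then \<gamma> else 0) = 0" using w s unfolding wvalid_def by auto
  have a3: "(\<Sum>a\<in>A. (1 - \<gamma>) * \<alpha> a + (if a = s then \<gamma> else 0)) = 1"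
    using w s A unfolding wvalid_def by (simp add: sum.distrib sum_distrib_left[symmetric])
  have a4: "(\<Sum>a\<in>A. ((1 - \<gamma>) * \<alpha> a + (if a = s then \<gamma> else 0)) *\<^sub>R a) = x + \<gamma> *\<^sub>R (s - x)"
  proof -
    have "(\<Sum>a\<in>A. ((1 - \<gamma>) * \<alpha> a + (if a = s then \<gamma> else 0)) *\<^sub>R a)
        = (1 - \<gamma>) *\<^sub>R (\<Sum>a\<in>A. \<alpha> a *\<^sub>R a) + (\<Sum>a\<in>A. (if a = s then \<gamma> *\<^sub>R a else 0))"
      by (simp add: scaleR_add_left sum.distrib scaleR_sum_right if_distrib[of "\<lambda>c. c *\<^sub>R _"] cong: if_cong)
    also have "(\<Sum>a\<in>A. (if a = s then \<gamma> *\<^sub>R a else 0)) = \<gamma> *\<^sub>R s" using A s by (simp add: sum.delta')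
    finally show ?thesis using w unfolding wvalid_def by (simp add: algebra_simps)
  qed
  show ?thesis unfolding wvalid_def using a1 a2 a3 a4[symmetric] by blast
qed

lemma wv_away:
  assumes A: "finite A" and w: "wvalid A \<alpha> x" and v: "v \<in> A" "0 < \<alpha> v" and g: "0 \<le> \<gamma>"
    and gb: "\<alpha> v < 1 \<Longrightarrow> \<gamma> \<le> \<alpha> v / (1 - \<alpha> v)"
  shows "wvalid A (\<lambda>a. (1 + \<gamma>) * \<alpha> a - (if a = v then \<gamma> else 0)) (x + \<gamma> *\<^sub>R (x - v))"
proof -
  have le1: "\<alpha> v \<le> 1" by (rule wv_le1[OF A w])
  have nv: "0 \<le> (1 + \<gamma>) * \<alpha> v - \<gamma>"
  proof (cases "\<alpha> v < 1")
    case True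
    hence "\<gamma> * (1 - \<alpha> v) \<le> \<alpha> v" using gb[OF True] by (simp add: field_simps)
    thus ?thesis by (simp add: algebra_simps)
  next
    case False thus ?thesis using le1 by simp
  qed
  have a1: "\<forall>a. 0 \<le> (1 + \<gamma>) * \<alpha> a - (if a = v then \<gamma> else 0)" using w g nv unfolding wvalid_def by auto
  have a2: "\<forall>a. a \<notin> A \<longrightarrow> (1 + \<gamma>) * \<alpha> a - (if a = v then \<gamma> else 0) = 0" using w v unfolding wvalid_def by auto
  have a3: "(\<Sum>a\<in>A. (1 + \<gamma>) * \<alpha> a - (if a = v then \<gamma> else 0)) = 1"
    using w v A unfolding wvalid_def by (simp add: sum_subtractf sum_distrib_left[symmetric])
  have a4: "(\<Sum>a\<in>A. ((1 + \<gamma>) * \<alpha> a - (if a = v then \<gamma> else 0)) *\<^sub>R a) = x + \<gamma> *\<^sub>R (x - v)"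
  proof -
    have "(\<Sum>a\<in>A. ((1 + \<gamma>) * \<alpha> a - (if a = v then \<gamma> else 0)) *\<^sub>R a)
        = (1 + \<gamma>) *\<^sub>R (\<Sum>a\<in>A. \<alpha> a *\<^sub>R a) - (\<Sum>a\<in>A. (if a = v then \<gamma> *\<^sub>R a else 0))"
      by (simp add: scaleR_diff_left sum_subtractf scaleR_sum_right if_distrib[of "\<lambda>c. c *\<^sub>R _"] cong: if_cong)
    also have "(\<Sum>a\<in>A. (if a = v then \<gamma> *\<^sub>R a else 0)) = \<gamma> *\<^sub>R v" using A v by (simp add: sum.delta')
    finally show ?thesis using w unfolding wvalid_def by (simp add: algebra_simps)
  qed
  show ?thesis unfolding wvalid_def using a1 a2 a3 a4[symmetric] by blast
qed


lemma ar_le1: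
  assumes "0 < a" "a < 1" "0 < b" "b \<le> 1"
  shows "real_of_ereal (min (away_ratio a) (away_ratio b)) \<le> a / (1 - a)"
  using assms by (cases "b < 1") (auto simp: away_ratio_def min_def)

lemma ar_le2:
  assumes "0 < a" "a \<le> 1" "0 < b" "b < 1"
  shows "real_of_ereal (min (away_ratio a) (away_ratio b)) \<le> b / (1 - b)"
  using assms by (cases "a < 1") (auto simp: away_ratio_def min_def)

lemma ar_nonneg:
  assumes "0 < a" "a \<le> 1" "0 < b" "b \<le> 1"
  shows "0 \<le> real_of_ereal (min (away_ratio a) (away_ratio b))"
  using assms by (cases "a < 1"; cases "b < 1") (auto simp: away_ratio_def min_def)

lemma ar_cases:
  assumes "0 < a" "a \<le> 1" "0 < b" "b \<le> 1" "a < 1 \<or> b < 1"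
  shows "(a < 1 \<and> real_of_ereal (min (away_ratio a) (away_ratio b)) = a / (1 - a))
       \<or> (b < 1 \<and> real_of_ereal (min (away_ratio a) (away_ratio b)) = b / (1 - b))"
  using assms by (cases "a < 1"; cases "b < 1") (auto simp: away_ratio_def min_def)

lemma supp_fw:
  fixes \<alpha> :: "'c \<Rightarrow> real" and \<gamma> :: real
  assumes "\<forall>a. 0 \<le> \<alpha> a" "0 \<le> \<gamma>" "\<gamma> \<le> 1"
  shows "{a\<in>A. 0 < (1 - \<gamma>) * \<alpha> a + (if a = s then \<gamma> else 0)} \<subseteq> insert s {a\<in>A. 0 < \<alpha> a}"
proof
  fix a assume a: "a \<in> {a\<in>A. 0 < (1 - \<gamma>) * \<alpha> a + (if a = s then \<gamma> else 0)}"
  show "a \<in> insert s {a\<in>A. 0 < \<alpha> a}"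
  proof (cases "a = s")
    case False
    hence "0 < (1 - \<gamma>) * \<alpha> a" using a by auto
    hence "\<alpha> a \<noteq> 0" by auto
    thus ?thesis using assms(1) a by (auto simp: less_le)
  qed simp
qed

lemma supp_away:
  fixes \<alpha> :: "'c \<Rightarrow> real" and \<gamma> :: real
  assumes "\<forall>a. 0 \<le> \<alpha> a" "0 \<le> \<gamma>" "0 < \<alpha> v"
  shows "{a\<in>A. 0 < (1 + \<gamma>) * \<alpha> a - (if a = v then \<gamma> else 0)} \<subseteq> {a\<in>A. 0 < \<alpha> a}"
proof
  fix a assume a: "a \<in> {a\<in>A. 0 < (1 + \<gamma>) * \<alpha> a - (if a = v then \<gamma> else 0)}"
  show "a \<in> {a\<in>A. 0 < \<alpha> a}"
  proof (cases "a = v")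
    case False
    hence "0 < (1 + \<gamma>) * \<alpha> a" using a by auto
    hence "\<alpha> a \<noteq> 0" by auto
    thus ?thesis using assms(1) a by (auto simp: less_le)
  next
    case True thus ?thesis using a assms by auto
  qed
qed

lemma supp_drop:
  fixes \<alpha> :: "'c \<Rightarrow> real" and \<gamma> :: real
  assumes "\<forall>a. 0 \<le> \<alpha> a" "0 < \<alpha> v" "\<alpha> v < 1" "\<gamma> = \<alpha> v / (1 - \<alpha> v)"
  shows "{a\<in>A. 0 < (1 + \<gamma>) * \<alpha> a - (if a = v then \<gamma> else 0)} \<subseteq> {a\<in>A. 0 < \<alpha> a} - {v}"
proof -
  have g0: "0 \<le> \<gamma>" using assms by (simp add: divide_nonneg_pos)
  have "(1 + \<gamma>) * \<alpha> v - \<gamma> = 0" using assms(3) unfolding assms(4) by (simp add: field_simps)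
  thus ?thesis using supp_away[OF assms(1) g0 assms(2), of A] by auto
qed

lemma card_less_Suc_filter:
  "card {t. t < Suc T \<and> P t} = card {t. t < T \<and> P t} + (if P T then 1 else 0)"
proof (cases "P T")
  case True
  hence "{t. t < Suc T \<and> P t} = insert T {t. t < T \<and> P t}" by (auto simp: less_Suc_eq)
  thus ?thesis using True by simp
next
  case False
  hence "{t. t < Suc T \<and> P t} = {t. t < T \<and> P t}" by (auto simp: less_Suc_eq)
  thus ?thesis using False by simp
qed


lemma wv_init:
  assumes "finite A" "x0 \<in> A"
  shows "wvalid A (\<lambda>a. if a = x0 then 1 else 0) x0"
  unfolding wvalid_def using assms by (simp add: if_distrib[of "\<lambda>c. c *\<^sub>R _"] cong: if_cong)

lemma gap_nonneg:
  fixes x :: "'a::real_inner" and y :: "'b::real_inner" and r s v :: "'a \<times> 'b"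
  assumes A: "finite A" and B: "finite B" and wx: "wvalid A \<alpha>x x" and wy: "wvalid B \<alpha>y y"
    and lmo: "\<forall>s'\<in>(convex hull A) \<times> (convex hull B). inner s r \<le> inner s' r"
    and v: "v \<in> {a\<in>A. 0 < \<alpha>x a} \<times> {b\<in>B. 0 < \<alpha>y b}"
    and vmax: "\<forall>v'\<in>{a\<in>A. 0 < \<alpha>x a} \<times> {b\<in>B. 0 < \<alpha>y b}. inner r v' \<le> inner r v"
  shows "0 \<le> inner (- r) (s - (x, y))" "0 \<le> inner (- r) ((x, y) - v)"
proof -
  have "(x, y) \<in> (convex hull A) \<times> (convex hull B)" using wv_hull[OF A wx] wv_hull[OF B wy] by simp
  hence "inner s r \<le> inner (x, y) r" using lmo by blast
  thus "0 \<le> inner (- r) (s - (x, y))" by (simp add: inner_diff_right inner_commute)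
  obtain rx ry where rr: "r = (rx, ry)" by (cases r)
  obtain vx vy where vv: "v = (vx, vy)" by (cases v)
  have "inner rx a \<le> inner rx vx" if "a \<in> {a\<in>A. 0 < \<alpha>x a}" for a
    using vmax[rule_format, of "(a, vy)"] that v vv rr by auto
  hence 1: "inner rx x \<le> inner rx vx" by (intro wv_inner_le[OF A wx]) auto
  have "inner ry b \<le> inner ry vy" if "b \<in> {b\<in>B. 0 < \<alpha>y b}" for b
    using vmax[rule_format, of "(vx, b)"] that v vv rr by auto
  hence 2: "inner ry y \<le> inner ry vy" by (intro wv_inner_le[OF B wy]) auto
  show "0 \<le> inner (- r) ((x, y) - v)" using 1 2 rr vv by (simp add: inner_diff_right)
qed




lemma curv_gen:
  fixes F :: "'p \<Rightarrow> 'c::real_inner \<Rightarrow> real"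
  assumes bd: "bdd_above (\<Union>p\<in>P. curv_set (F p) (dF p) K)" and K: "K \<noteq> {}" and p: "p \<in> P"
  shows "\<And>x s v \<gamma>. x \<in> K \<Longrightarrow> s \<in> K \<Longrightarrow> v \<in> K \<Longrightarrow> \<gamma> > 0 \<Longrightarrow> x + \<gamma> *\<^sub>R (s - v) \<in> K \<Longrightarrow>
           2 / \<gamma>\<^sup>2 * (F p (x + \<gamma> *\<^sub>R (s - v)) - F p x - \<gamma> * inner (s - v) (dF p x)) \<le> curv (F p) (dF p) K"
    and "curv (F p) (dF p) K \<le> (SUP p\<in>P. curv (F p) (dF p) K)"
    and "0 \<le> curv (F p) (dF p) K"
proof -
  let ?S = "\<lambda>p. curv_set (F p) (dF p) K"
  have bS: "bdd_above (?S y')" if "y' \<in> P" for y'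
    using bd that by (meson UN_upper bdd_above_mono)
  show "2 / \<gamma>\<^sup>2 * (F p (x + \<gamma> *\<^sub>R (s - v)) - F p x - \<gamma> * inner (s - v) (dF p x)) \<le> curv (F p) (dF p) K"
    if xx: "x \<in> K" "s \<in> K" "v \<in> K" and g: "\<gamma> > 0" and inX: "x + \<gamma> *\<^sub>R (s - v) \<in> K" for x s v \<gamma>
  proof -
    have mem: "2 / \<gamma>\<^sup>2 * (F p (x + \<gamma> *\<^sub>R (s - v)) - F p x - \<gamma> * inner (s - v) (dF p x)) \<in> ?S p"
      unfolding curv_set_def using xx g inX by blast
    show ?thesis unfolding curv_def by (rule cSup_upper[OF mem bS[OF p]])
  qed
  obtain B where B: "\<And>u. u \<in> (\<Union>p\<in>P. ?S p) \<Longrightarrow> u \<le> B" using bd by (auto simp: bdd_above_def)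
  obtain x0 where x0: "x0 \<in> K" using K by auto
  have zero: "0 \<in> ?S y'" for y'
  proof -
    have "2 / 1\<^sup>2 * (F y' (x0 + 1 *\<^sub>R (x0 - x0)) - F y' x0 - 1 * inner (x0 - x0) (dF y' x0)) \<in> ?S y'"
      unfolding curv_set_def using x0 by (intro CollectI exI[of _ x0] exI[of _ 1]) auto
    thus ?thesis by simp
  qed
  hence ne: "?S y' \<noteq> {}" for y' by blast
  show "0 \<le> curv (F p) (dF p) K" unfolding curv_def by (rule cSup_upper[OF zero bS[OF p]])
  have "bdd_above ((\<lambda>p. curv (F p) (dF p) K) ` P)"
    unfolding bdd_above_def curv_def
  proof (rule exI[of _ B], safe)
    fix y' assume "y' \<in> P"
    thus "Sup (?S y') \<le> B" by (intro cSup_least[OF ne]) (auto intro: B)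
  qed
  thus "curv (F p) (dF p) K \<le> (SUP p\<in>P. curv (F p) (dF p) K)"
    by (rule cSUP_upper[OF p])
qed

lemma curv_gen1:
  fixes F :: "'p \<Rightarrow> 'c::real_inner \<Rightarrow> real"
  assumes bd: "bdd_above (\<Union>p\<in>P. curv_set (F p) (dF p) K)" and K: "K \<noteq> {}" and p: "p \<in> P"
    and "x \<in> K" "s \<in> K" "v \<in> K" "\<gamma> > 0" "x + \<gamma> *\<^sub>R (s - v) \<in> K"
  shows "2 / \<gamma>\<^sup>2 * (F p (x + \<gamma> *\<^sub>R (s - v)) - F p x - \<gamma> * inner (s - v) (dF p x)) \<le> (SUP p\<in>P. curv (F p) (dF p) K)"
  using curv_gen(1)[OF bd K p, of x s v \<gamma>] curv_gen(2)[OF bd K p] assms by linarith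

lemma aux_half1: "(-a::real) \<le> (1 - 1/2) * - b + 1/2 * - c - k \<Longrightarrow> a \<le> b \<Longrightarrow> 0 < k \<Longrightarrow> c < b" by argo
lemma aux_half2: "(a::real) \<le> (1 - 1/2) * b + 1/2 * c - k \<Longrightarrow> b \<le> a \<Longrightarrow> 0 < k \<Longrightarrow> b < c" by argo

lemma ray_exit_prop:
  fixes K :: "'c::euclidean_space set"
  assumes K: "compact K" and xc: "xc \<in> K" and x: "x \<in> K" and ne: "x \<noteq> xc"
  shows "\<exists>l\<ge>1. ray_exit K x xc = x + l *\<^sub>R (xc - x) \<and> x + l *\<^sub>R (xc - x) \<in> K"
proof -
  let ?Lam = "{l::real. 0 \<le> l \<and> x + l *\<^sub>R (xc - x) \<in> K}"
  have one: "1 \<in> ?Lam" using xc by simp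
  obtain R where R: "\<And>k. k \<in> K \<Longrightarrow> norm k \<le> R" using compact_imp_bounded[OF K] bounded_iff by blast
  have np: "norm (xc - x) > 0" using ne by simp
  have bd: "bdd_above ?Lam"
  proof (rule bdd_aboveI[of _ "(R + norm x) / norm (xc - x)"])
    fix l assume l: "l \<in> ?Lam"
    have "l * norm (xc - x) = norm ((x + l *\<^sub>R (xc - x)) - x)" using l by simp
    also have "\<dots> \<le> norm (x + l *\<^sub>R (xc - x)) + norm x" by (rule norm_triangle_ineq4)
    also have "\<dots> \<le> R + norm x" using R l by auto
    finally show "l \<le> (R + norm x) / norm (xc - x)" using np by (simp add: field_simps)
  qed
  have cl: "closed ?Lam"
  proof -
    have "?Lam = {0..} \<inter> (\<lambda>l. x + l *\<^sub>R (xc - x)) -` K" by auto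
    moreover have "closed ((\<lambda>l. x + l *\<^sub>R (xc - x)) -` K)"
      by (rule continuous_closed_vimage) (auto intro!: continuous_intros compact_imp_closed K)
    ultimately show ?thesis by (auto intro: closed_Int)
  qed
  have "Sup ?Lam \<in> ?Lam" using one bd cl by (intro closed_contains_Sup) blast+
  moreover have "1 \<le> Sup ?Lam" using one bd by (rule cSup_upper)
  ultimately show ?thesis unfolding ray_exit_def by auto
qed

lemma intsc_gen:
  fixes F :: "'p \<Rightarrow> 'c::real_inner \<Rightarrow> real"
  assumes bd: "bdd_below (\<Union>p\<in>P. int_sc_set (F p) (dF p) K xc)" and p: "p \<in> P"
  shows "(INF p\<in>P. mu_int (F p) (dF p) K xc) \<le> mu_int (F p) (dF p) K xc"
    and "\<And>e. e \<in> int_sc_set (F p) (dF p) K xc \<Longrightarrow> mu_int (F p) (dF p) K xc \<le> e"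
proof -
  obtain B where B: "\<And>u. u \<in> (\<Union>p\<in>P. int_sc_set (F p) (dF p) K xc) \<Longrightarrow> B \<le> u" using bd by (auto simp: bdd_below_def)
  have bS: "bdd_below (int_sc_set (F p') (dF p') K xc)" if "p' \<in> P" for p'
    using bd that by (meson UN_upper bdd_below_mono)
  show "mu_int (F p) (dF p) K xc \<le> e" if "e \<in> int_sc_set (F p) (dF p) K xc" for e
    unfolding mu_int_def by (rule cInf_lower[OF that bS[OF p]])
  have "bdd_below ((\<lambda>p. mu_int (F p) (dF p) K xc) ` P)"
  proof (rule bdd_belowI[of _ "min B (Inf {})"])
    fix u assume "u \<in> (\<lambda>p. mu_int (F p) (dF p) K xc) ` P"
    then obtain p' where p': "p' \<in> P" "u = mu_int (F p') (dF p') K xc" by auto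
    show "min B (Inf {}) \<le> u"
    proof (cases "int_sc_set (F p') (dF p') K xc = {}")
      case True thus ?thesis using p' unfolding mu_int_def by simp
    next
      case False
      hence "B \<le> u" unfolding p'(2) mu_int_def by (intro cInf_greatest) (use B p' in auto)
      thus ?thesis by simp
    qed
  qed
  thus "(INF p\<in>P. mu_int (F p) (dF p) K xc) \<le> mu_int (F p) (dF p) K xc" by (rule cINF_lower[OF _ p])
qed

lemma int_block_gen:
  fixes F :: "'p \<Rightarrow> 'c::euclidean_space \<Rightarrow> real"
  assumes bd: "bdd_below (\<Union>p\<in>P. int_sc_set (F p) (dF p) K xc)" and p: "p \<in> P"
    and K: "compact K" and xc: "xc \<in> K" and x: "x \<in> K"
    and lmo: "\<And>a. a \<in> K \<Longrightarrow> inner s (dF p x) \<le> inner a (dF p x)"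
    and m: "m \<le> (INF p\<in>P. mu_int (F p) (dF p) K xc)"
  shows "\<exists>c. 0 \<le> c \<and> c \<le> 1 \<and> F p x - F p xc \<le> c * inner (x - s) (dF p x) - c\<^sup>2 * m / 2"
proof (cases "x = xc")
  case True thus ?thesis by (intro exI[of _ 0]) auto
next
  case False
  obtain l where l: "l \<ge> 1" "ray_exit K x xc = x + l *\<^sub>R (xc - x)" "x + l *\<^sub>R (xc - x) \<in> K"
    using ray_exit_prop[OF K xc x False] by blast
  define e where "e = ray_exit K x xc"
  define c where "c = 1 / l"
  have c: "0 < c" "c \<le> 1" using l(1) unfolding c_def by auto
  have u: "x + c *\<^sub>R (e - x) = xc" unfolding e_def l(2) c_def using l(1) by (simp add: algebra_simps)
  have eK: "e \<in> K" unfolding e_def using l by simp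
  have "2 / c\<^sup>2 * (F p (x + c *\<^sub>R (e - x)) - F p x - inner (x + c *\<^sub>R (e - x) - x) (dF p x)) \<in> int_sc_set (F p) (dF p) K xc"
    unfolding int_sc_set_def e_def using x False c by blast
  hence "mu_int (F p) (dF p) K xc \<le> 2 / c\<^sup>2 * (F p xc - F p x - inner (xc - x) (dF p x))"
    using intsc_gen(2)[OF bd p] u by simp
  hence "m \<le> 2 / c\<^sup>2 * (F p xc - F p x - inner (xc - x) (dF p x))" using m intsc_gen(1)[OF bd p] by linarith
  hence "c\<^sup>2 / 2 * m \<le> c\<^sup>2 / 2 * (2 / c\<^sup>2 * (F p xc - F p x - inner (xc - x) (dF p x)))"
    by (rule mult_left_mono) simp
  also have "\<dots> = F p xc - F p x - inner (xc - x) (dF p x)" using c by simp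
  finally have A: "c\<^sup>2 / 2 * m \<le> F p xc - F p x - inner (xc - x) (dF p x)" .
  have "inner (xc - x) (dF p x) = c * inner (e - x) (dF p x)" unfolding u[symmetric] by (simp add: inner_diff_left)
  moreover have "inner s (dF p x) \<le> inner e (dF p x)" using lmo[OF eK] .
  hence "c * inner (x - e) (dF p x) \<le> c * inner (x - s) (dF p x)" using c by (intro mult_left_mono) (auto simp: inner_diff_left)
  moreover have "inner (x - e) (dF p x) = - inner (e - x) (dF p x)" by (simp add: inner_diff_left)
  ultimately have "F p x - F p xc \<le> c * inner (x - s) (dF p x) - c\<^sup>2 * m / 2" using A by (simp add: algebra_simps)
  thus ?thesis using c by (intro exI[of _ c]) auto
qed

lemma mu_le_curv_gen:
  fixes F :: "'p \<Rightarrow> 'c::euclidean_space \<Rightarrow> real"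
  assumes bd: "bdd_below (\<Union>p\<in>P. int_sc_set (F p) (dF p) K xc)" and bdc: "bdd_above (\<Union>p\<in>P. curv_set (F p) (dF p) K)"
    and p: "p \<in> P" and K: "compact K" and xc: "xc \<in> K" and x: "x \<in> K" and ne: "x \<noteq> xc"
  shows "(INF p\<in>P. mu_int (F p) (dF p) K xc) \<le> (SUP p\<in>P. curv (F p) (dF p) K)"
proof -
  obtain l where l: "l \<ge> 1" "ray_exit K x xc = x + l *\<^sub>R (xc - x)" "x + l *\<^sub>R (xc - x) \<in> K"
    using ray_exit_prop[OF K xc x ne] by blast
  define e where "e = ray_exit K x xc"
  define c where "c = 1 / l"
  have c: "0 < c" "c \<le> 1" using l(1) unfolding c_def by auto
  have u: "x + c *\<^sub>R (e - x) = xc" unfolding e_def l(2) c_def using l(1) by (simp add: algebra_simps)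
  have eK: "e \<in> K" unfolding e_def using l by simp
  have "2 / c\<^sup>2 * (F p (x + c *\<^sub>R (e - x)) - F p x - inner (x + c *\<^sub>R (e - x) - x) (dF p x)) \<in> int_sc_set (F p) (dF p) K xc"
    unfolding int_sc_set_def e_def using x ne c by blast
  hence "mu_int (F p) (dF p) K xc \<le> 2 / c\<^sup>2 * (F p (x + c *\<^sub>R (e - x)) - F p x - c * inner (e - x) (dF p x))"
    using intsc_gen(2)[OF bd p] by simp
  also have "\<dots> \<le> (SUP p\<in>P. curv (F p) (dF p) K)"
    by (rule curv_gen1[OF bdc _ p x eK x c(1)]) (use K xc u in auto)
  finally show ?thesis using intsc_gen(1)[OF bd p] by linarith
qed

lemma tangent_gen:
  fixes f :: "real \<Rightarrow> real"
  assumes d: "(f has_field_derivative D) (at 0)" and cv: "\<And>t. 0 < t \<Longrightarrow> t < 1 \<Longrightarrow> f t \<le> (1 - t) * f 0 + t * f 1"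
  shows "D \<le> f 1 - f 0"
proof -
  have "((\<lambda>t. (f t - f 0) / (t - 0)) \<longlongrightarrow> D) (at_right 0)"
    using has_field_derivative_at_within[OF d, of "{0<..}"] unfolding has_field_derivative_iff .
  moreover have "eventually (\<lambda>t. (f t - f 0) / (t - 0) \<le> f 1 - f 0) (at_right 0)"
    using eventually_at_right_real[of 0 1]
  proof (rule eventually_mono)
    fix t :: real assume t: "t \<in> {0<..<1}"
    hence "f t - f 0 \<le> t * (f 1 - f 0)" using cv[of t] by (simp add: algebra_simps)
    thus "(f t - f 0) / (t - 0) \<le> f 1 - f 0" using t by (simp add: divide_le_eq mult.commute)
  qed simp
  ultimately show ?thesis by (rule tendsto_upperbound) simp
qed

lemma mu_geo_le_curv_gen:
  fixes F :: "'p \<Rightarrow> 'c::euclidean_space \<Rightarrow> real"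
  assumes A: "finite A" and bd: "bdd_below (\<Union>p\<in>P. geo_sc_set (F p) (dF p) A)"
    and bdc: "bdd_above (\<Union>p\<in>P. curv_set (F p) (dF p) (convex hull A))"
    and p: "p \<in> P" and vert: "vert \<in> A" and xc: "xc \<in> convex hull A" and neg: "inner (dF p vert) (xc - vert) < 0"
  shows "(INF p\<in>P. mu_geo (F p) (dF p) A) \<le> (SUP p\<in>P. curv (F p) (dF p) (convex hull A))"
proof -
  let ?g = "dF p vert"
  have Ane: "A \<noteq> {}" using vert by auto
  obtain sf where sf: "sf \<in> A" "fw_val ?g A = inner ?g sf" "\<forall>a\<in>A. inner ?g sf \<le> inner ?g a"
    using fw_attained[OF A Ane] by blast
  have verth: "vert \<in> convex hull A" using vert by (rule hull_inc)
  have sfh: "sf \<in> convex hull A" using sf(1) by (rule hull_inc)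
  have "fw_val ?g A \<le> inner ?g xc" by (rule fw_le[OF A xc])
  hence neg2: "inner ?g (sf - vert) < 0" using neg sf(2) by (simp add: inner_diff_right)
  have sup: "{vert} \<in> atom_supports A vert" unfolding atom_supports_def using vert
    by (intro CollectI conjI exI[of _ "\<lambda>_. 1"]) auto
  have av: "away_val ?g A vert = inner ?g vert"
    using away_ge[OF A verth, of ?g] away_le[OF A sup, of vert ?g] by simp
  have gam: "gammaA (dF p) A vert sf = 1"
    unfolding gammaA_def av sf(2) using neg2 by (simp add: inner_diff_right field_simps)
  have "2 / (gammaA (dF p) A vert sf)\<^sup>2 * (F p sf - F p vert - inner (sf - vert) (dF p vert)) \<in> geo_sc_set (F p) (dF p) A"
    unfolding geo_sc_set_def using verth sfh neg2 by blast
  hence "(INF p\<in>P. mu_geo (F p) (dF p) A) \<le> 2 / 1\<^sup>2 * (F p (vert + 1 *\<^sub>R (sf - vert)) - F p vert - 1 * inner (sf - vert) (dF p vert))"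
    using geosc_gen[OF bd p] gam by fastforce
  also have "\<dots> \<le> (SUP p\<in>P. curv (F p) (dF p) (convex hull A))"
    by (rule curv_gen1[OF bdc _ p verth sfh verth]) (use sfh in auto)
  finally show ?thesis .
qed

locale spb =
  fixes X :: "'a::euclidean_space set" and Y :: "'b::euclidean_space set"
    and L :: "'a \<times> 'b \<Rightarrow> real" and grad :: "'a \<times> 'b \<Rightarrow> 'a \<times> 'b"
    and xs :: 'a and ys :: 'b
  assumes X: "X \<noteq> {}" "convex X" "compact X"
    and Y: "Y \<noteq> {}" "convex Y" "compact Y"
    and diff: "\<forall>z\<in>X \<times> Y. (L has_derivative (\<lambda>h. inner (grad z) h)) (at z)"
    and sc: "\<exists>\<mu>X \<mu>Y. \<mu>X > 0 \<and> \<mu>Y > 0 \<and> (\<forall>y\<in>Y. sconvex_on \<mu>X X (\<lambda>x. L (x, y)))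
                                     \<and> (\<forall>x\<in>X. sconvex_on \<mu>Y Y (\<lambda>y. - L (x, y)))"
    and saddle: "xs \<in> X" "ys \<in> Y" "\<forall>x\<in>X. \<forall>y\<in>Y. L (xs, y) \<le> L (xs, ys) \<and> L (xs, ys) \<le> L (x, ys)"
    and curv_fin: "bdd_above (\<Union>y\<in>Y. curv_set (\<lambda>x. L (x, y)) (\<lambda>x. fst (grad (x, y))) X)"
                  "bdd_above (\<Union>x\<in>X. curv_set (\<lambda>y. - L (x, y)) (\<lambda>y. - snd (grad (x, y))) Y)"
begin

definition "Cx = (SUP y\<in>Y. curv (\<lambda>x. L (x, y)) (\<lambda>x. fst (grad (x, y))) X)"
definition "Cy = (SUP x\<in>X. curv (\<lambda>y. - L (x, y)) (\<lambda>y. - snd (grad (x, y))) Y)"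

lemma CL_eq: "C_L X Y L grad = (Cx + Cy) / 2"
  unfolding C_L_def Cx_def Cy_def ..


lemma Lx_step:
  assumes y: "y \<in> Y" and xx: "x \<in> X" "s \<in> X" "v \<in> X" and g: "\<gamma> \<ge> 0" and inX: "x + \<gamma> *\<^sub>R (s - v) \<in> X"
  shows "L (x + \<gamma> *\<^sub>R (s - v), y) \<le> L (x, y) + \<gamma> * inner (s - v) (fst (grad (x, y))) + \<gamma>\<^sup>2 / 2 * Cx"
proof (cases "\<gamma> = 0")
  case True
  have "0 \<le> Cx"
    using curv_gen(2,3)[where F="\<lambda>y x. L (x, y)" and P=Y and dF="\<lambda>y x. fst (grad (x, y))" and K=X and p=y] curv_fin(1) X(1) y
    unfolding Cx_def by simp
  thus ?thesis using True by simp
next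
  case False
  hence gp: "\<gamma> > 0" using g by simp
  have "2 / \<gamma>\<^sup>2 * (L (x + \<gamma> *\<^sub>R (s - v), y) - L (x, y) - \<gamma> * inner (s - v) (fst (grad (x, y)))) \<le> Cx"
    using curv_gen1[where F="\<lambda>y x. L (x, y)" and P=Y and dF="\<lambda>y x. fst (grad (x, y))" and K=X and p=y and x=x and s=s and v=v and \<gamma>=\<gamma>] curv_fin(1) X(1) y xx gp inX
    unfolding Cx_def by simp
  hence "\<gamma>\<^sup>2 / 2 * (2 / \<gamma>\<^sup>2 * (L (x + \<gamma> *\<^sub>R (s - v), y) - L (x, y) - \<gamma> * inner (s - v) (fst (grad (x, y))))) \<le> \<gamma>\<^sup>2 / 2 * Cx"
    by (intro mult_left_mono) auto
  moreover have "\<gamma>\<^sup>2 / 2 * (2 / \<gamma>\<^sup>2 * (L (x + \<gamma> *\<^sub>R (s - v), y) - L (x, y) - \<gamma> * inner (s - v) (fst (grad (x, y))))) = L (x + \<gamma> *\<^sub>R (s - v), y) - L (x, y) - \<gamma> * inner (s - v) (fst (grad (x, y)))"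
    using gp by simp
  ultimately show ?thesis by linarith
qed

lemma Ly_step:
  assumes x: "x \<in> X" and yy: "y \<in> Y" "s \<in> Y" "v \<in> Y" and g: "\<gamma> \<ge> 0" and inY: "y + \<gamma> *\<^sub>R (s - v) \<in> Y"
  shows "- L (x, y + \<gamma> *\<^sub>R (s - v)) \<le> - L (x, y) + \<gamma> * inner (s - v) (- snd (grad (x, y))) + \<gamma>\<^sup>2 / 2 * Cy"
proof (cases "\<gamma> = 0")
  case True
  have "0 \<le> Cy"
    using curv_gen(2,3)[where F="\<lambda>x y. - L (x, y)" and P=X and dF="\<lambda>x y. - snd (grad (x, y))" and K=Y and p=x] curv_fin(2) Y(1) x
    unfolding Cy_def by simp
  thus ?thesis using True by simp
next
  case False
  hence gp: "\<gamma> > 0" using g by simp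
  have "2 / \<gamma>\<^sup>2 * (- L (x, y + \<gamma> *\<^sub>R (s - v)) - - L (x, y) - \<gamma> * inner (s - v) (- snd (grad (x, y)))) \<le> Cy"
    using curv_gen1[where F="\<lambda>x y. - L (x, y)" and P=X and dF="\<lambda>x y. - snd (grad (x, y))" and K=Y and p=x and x=y and s=s and v=v and \<gamma>=\<gamma>] curv_fin(2) Y(1) x yy gp inY
    unfolding Cy_def by simp
  hence "\<gamma>\<^sup>2 / 2 * (2 / \<gamma>\<^sup>2 * (- L (x, y + \<gamma> *\<^sub>R (s - v)) - - L (x, y) - \<gamma> * inner (s - v) (- snd (grad (x, y))))) \<le> \<gamma>\<^sup>2 / 2 * Cy"
    by (intro mult_left_mono) auto
  moreover have "\<gamma>\<^sup>2 / 2 * (2 / \<gamma>\<^sup>2 * (- L (x, y + \<gamma> *\<^sub>R (s - v)) - - L (x, y) - \<gamma> * inner (s - v) (- snd (grad (x, y))))) = - L (x, y + \<gamma> *\<^sub>R (s - v)) - - L (x, y) - \<gamma> * inner (s - v) (- snd (grad (x, y)))"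
    using gp by simp
  ultimately show ?thesis by linarith
qed

lemma Cx_nonneg: "0 \<le> Cx"
proof -
  obtain y where y: "y \<in> Y" using Y(1) by auto
  show ?thesis
    using curv_gen(2,3)[where F="\<lambda>y x. L (x, y)" and P=Y and dF="\<lambda>y x. fst (grad (x, y))" and K=X and p=y] curv_fin(1) X(1) y
    unfolding Cx_def by simp
qed

lemma Cy_nonneg: "0 \<le> Cy"
proof -
  obtain x where x: "x \<in> X" using X(1) by auto
  show ?thesis
    using curv_gen(2,3)[where F="\<lambda>x y. - L (x, y)" and P=X and dF="\<lambda>x y. - snd (grad (x, y))" and K=Y and p=x] curv_fin(2) Y(1) x
    unfolding Cy_def by simp
qed

lemma hy_pos:
  assumes y: "y \<in> Y" "y \<noteq> ys"
  shows "L (xs, y) < L (xs, ys)"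
proof -
  obtain \<mu>Y where mu: "\<mu>Y > 0" "sconvex_on \<mu>Y Y (\<lambda>y. - L (xs, y))" using sc saddle(1) by blast
  let ?m = "(1 - 1/2) *\<^sub>R ys + (1/2::real) *\<^sub>R y"
  have H: "\<forall>t::real. 0 \<le> t \<and> t \<le> 1 \<longrightarrow> - L (xs, (1 - t) *\<^sub>R ys + t *\<^sub>R y) \<le> (1 - t) * - L (xs, ys) + t * - L (xs, y) - \<mu>Y / 2 * t * (1 - t) * (norm (ys - y))\<^sup>2"
    using mu(2) saddle(2) y(1) unfolding sconvex_on_def by blast
  have "- L (xs, ?m) \<le> (1 - 1/2) * - L (xs, ys) + 1/2 * - L (xs, y) - \<mu>Y / 2 * (1/2) * (1 - 1/2) * (norm (ys - y))\<^sup>2"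
    using spec[OF H, of "1/2"] by simp
  moreover have "?m \<in> Y" using Y(2) saddle(2) y(1) by (intro convexD) auto
  hence "L (xs, ?m) \<le> L (xs, ys)" using saddle(3) saddle(1) by blast
  moreover have "(norm (ys - y))\<^sup>2 > 0" using y(2) by simp
  moreover have "0 < \<mu>Y / 2 * (1/2) * (1 - 1/2) * (norm (ys - y))\<^sup>2" using mu(1) \<open>(norm (ys - y))\<^sup>2 > 0\<close> by simp
  ultimately show ?thesis by (meson aux_half1)
qed

lemma hx_pos:
  assumes x: "x \<in> X" "x \<noteq> xs"
  shows "L (xs, ys) < L (x, ys)"
proof -
  obtain \<mu>X where mu: "\<mu>X > 0" "sconvex_on \<mu>X X (\<lambda>x. L (x, ys))" using sc saddle(2) by blast
  let ?m = "(1 - 1/2) *\<^sub>R xs + (1/2::real) *\<^sub>R x"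
  have H: "\<forall>t::real. 0 \<le> t \<and> t \<le> 1 \<longrightarrow> L ((1 - t) *\<^sub>R xs + t *\<^sub>R x, ys) \<le> (1 - t) * L (xs, ys) + t * L (x, ys) - \<mu>X / 2 * t * (1 - t) * (norm (xs - x))\<^sup>2"
    using mu(2) saddle(1) x(1) unfolding sconvex_on_def by blast
  have "L (?m, ys) \<le> (1 - 1/2) * L (xs, ys) + 1/2 * L (x, ys) - \<mu>X / 2 * (1/2) * (1 - 1/2) * (norm (xs - x))\<^sup>2"
    using spec[OF H, of "1/2"] by simp
  moreover have "?m \<in> X" using X(2) saddle(1) x(1) by (intro convexD) auto
  hence "L (xs, ys) \<le> L (?m, ys)" using saddle(3) saddle(2) by blast
  moreover have "(norm (xs - x))\<^sup>2 > 0" using x(2) by simp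
  moreover have "0 < \<mu>X / 2 * (1/2) * (1 - 1/2) * (norm (xs - x))\<^sup>2" using mu(1) \<open>(norm (xs - x))\<^sup>2 > 0\<close> by simp
  ultimately show ?thesis by (meson aux_half2)
qed


lemma MXY_bound:
  assumes bdd: "bdd_above (MXY_set X Y L grad xs ys)" and xx: "x \<in> X" "s \<in> X" "v \<in> X" and y: "y \<in> Y"
  shows "inner (s - v) (fst (grad (x, ys)) - fst (grad (x, y))) \<le> M_L X Y L grad xs ys * sqrt (L (xs, ys) - L (xs, y))"
proof (cases "y = ys")
  case True thus ?thesis by simp
next
  case False
  let ?q = "sqrt (L (xs, ys) - L (xs, y))"
  have qp: "?q > 0" using hy_pos[OF y False] by simp
  have "inner (s - v) ((fst (grad (x, ys)) - fst (grad (x, y))) /\<^sub>R ?q) \<in> MXY_set X Y L grad xs ys"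
    unfolding MXY_set_def using xx y False by blast
  hence "inner (s - v) ((fst (grad (x, ys)) - fst (grad (x, y))) /\<^sub>R ?q) \<le> Sup (MXY_set X Y L grad xs ys)"
    using bdd by (rule cSup_upper)
  also have "\<dots> \<le> M_L X Y L grad xs ys" unfolding M_L_def by simp
  finally have "inner (s - v) (fst (grad (x, ys)) - fst (grad (x, y))) / ?q \<le> M_L X Y L grad xs ys"
    by (simp add: inner_scaleR_right divide_inverse mult.commute)
  thus ?thesis using qp by (simp add: divide_le_eq)
qed

lemma MYX_bound:
  assumes bdd: "bdd_above (MYX_set X Y L grad xs ys)" and x: "x \<in> X" and yy: "y \<in> Y" "s \<in> Y" "v \<in> Y"
  shows "inner (s - v) (snd (grad (x, y)) - snd (grad (xs, y))) \<le> M_L X Y L grad xs ys * sqrt (L (x, ys) - L (xs, ys))"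
proof (cases "x = xs")
  case True thus ?thesis by simp
next
  case False
  let ?q = "sqrt (L (x, ys) - L (xs, ys))"
  have qp: "?q > 0" using hx_pos[OF x False] by simp
  have "inner (s - v) ((snd (grad (x, y)) - snd (grad (xs, y))) /\<^sub>R ?q) \<in> MYX_set X Y L grad xs ys"
    unfolding MYX_set_def using yy x False by blast
  hence "inner (s - v) ((snd (grad (x, y)) - snd (grad (xs, y))) /\<^sub>R ?q) \<le> Sup (MYX_set X Y L grad xs ys)"
    using bdd by (rule cSup_upper)
  also have "\<dots> \<le> M_L X Y L grad xs ys" unfolding M_L_def by simp
  finally have "inner (s - v) (snd (grad (x, y)) - snd (grad (xs, y))) / ?q \<le> M_L X Y L grad xs ys"
    by (simp add: inner_scaleR_right divide_inverse mult.commute)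
  thus ?thesis using qp by (simp add: divide_le_eq)
qed

lemma descent:
  assumes bdd: "bdd_above (MXY_set X Y L grad xs ys)" "bdd_above (MYX_set X Y L grad xs ys)"
    and z: "z \<in> X \<times> Y" and p: "p \<in> X \<times> Y" and q: "q \<in> X \<times> Y" and g: "\<gamma> \<ge> 0"
    and z': "z + \<gamma> *\<^sub>R (p - q) \<in> X \<times> Y"
  shows "sp_w L xs ys (z + \<gamma> *\<^sub>R (p - q)) \<le> sp_w L xs ys z + \<gamma> * inner (p - q) (sp_r grad z)
          + \<gamma> * (M_L X Y L grad xs ys * (sqrt (L (fst z, ys) - L (xs, ys)) + sqrt (L (xs, ys) - L (xs, snd z))))
          + \<gamma>\<^sup>2 * C_L X Y L grad"
proof -
  obtain x y where zz: "z = (x, y)" by (cases z)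
  obtain px py where pp: "p = (px, py)" by (cases p)
  obtain qx qy where qq: "q = (qx, qy)" by (cases q)
  have xy: "x \<in> X" "y \<in> Y" "px \<in> X" "py \<in> Y" "qx \<in> X" "qy \<in> Y" using z p q zz pp qq by auto
  have in1: "x + \<gamma> *\<^sub>R (px - qx) \<in> X" "y + \<gamma> *\<^sub>R (py - qy) \<in> Y" using z' zz pp qq by auto
  let ?M = "M_L X Y L grad xs ys"
  have A1: "L (x + \<gamma> *\<^sub>R (px - qx), ys) \<le> L (x, ys) + \<gamma> * inner (px - qx) (fst (grad (x, ys))) + \<gamma>\<^sup>2 / 2 * Cx"
    by (rule Lx_step) (use xy in1 g saddle in auto)
  have A2: "- L (xs, y + \<gamma> *\<^sub>R (py - qy)) \<le> - L (xs, y) + \<gamma> * inner (py - qy) (- snd (grad (xs, y))) + \<gamma>\<^sup>2 / 2 * Cy"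
    by (rule Ly_step) (use xy in1 g saddle in auto)
  have B1: "inner (px - qx) (fst (grad (x, ys))) = inner (px - qx) (fst (grad (x, y))) + inner (px - qx) (fst (grad (x, ys)) - fst (grad (x, y)))"
    by (simp add: inner_diff_right)
  have B2: "inner (py - qy) (- snd (grad (xs, y))) = inner (py - qy) (- snd (grad (x, y))) + inner (py - qy) (snd (grad (x, y)) - snd (grad (xs, y)))"
    by (simp add: inner_diff_right)
  have M1: "inner (px - qx) (fst (grad (x, ys)) - fst (grad (x, y))) \<le> ?M * sqrt (L (xs, ys) - L (xs, y))"
    by (rule MXY_bound) (use bdd xy in auto)
  have M2: "inner (py - qy) (snd (grad (x, y)) - snd (grad (xs, y))) \<le> ?M * sqrt (L (x, ys) - L (xs, ys))"
    by (rule MYX_bound) (use bdd xy saddle in auto)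
  have M1': "\<gamma> * inner (px - qx) (fst (grad (x, ys))) \<le> \<gamma> * inner (px - qx) (fst (grad (x, y))) + \<gamma> * (?M * sqrt (L (xs, ys) - L (xs, y)))"
    using mult_left_mono[OF M1 g] B1 by (simp add: algebra_simps)
  have M2': "\<gamma> * inner (py - qy) (- snd (grad (xs, y))) \<le> \<gamma> * inner (py - qy) (- snd (grad (x, y))) + \<gamma> * (?M * sqrt (L (x, ys) - L (xs, ys)))"
    using mult_left_mono[OF M2 g] B2 by (simp add: algebra_simps)
  have R: "inner (p - q) (sp_r grad z) = inner (px - qx) (fst (grad (x, y))) + inner (py - qy) (- snd (grad (x, y)))"
    using zz pp qq by (simp add: sp_r_def)
  have W: "sp_w L xs ys (z + \<gamma> *\<^sub>R (p - q)) = L (x + \<gamma> *\<^sub>R (px - qx), ys) - L (xs, y + \<gamma> *\<^sub>R (py - qy))"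
    "sp_w L xs ys z = L (x, ys) - L (xs, y)"
    using zz pp qq by (simp_all add: sp_w_def)
  have E: "\<gamma> * (inner (px - qx) (fst (grad (x, y))) + inner (py - qy) (- snd (grad (x, y))))
      = \<gamma> * inner (px - qx) (fst (grad (x, y))) + \<gamma> * inner (py - qy) (- snd (grad (x, y)))"
    "\<gamma> * (?M * (sqrt (L (fst z, ys) - L (xs, ys)) + sqrt (L (xs, ys) - L (xs, snd z))))
      = \<gamma> * (?M * sqrt (L (x, ys) - L (xs, ys))) + \<gamma> * (?M * sqrt (L (xs, ys) - L (xs, y)))"
    "\<gamma>\<^sup>2 * ((Cx + Cy) / 2) = \<gamma>\<^sup>2 / 2 * Cx + \<gamma>\<^sup>2 / 2 * Cy"
    using zz by (simp_all add: algebra_simps)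
  show ?thesis unfolding W R CL_eq E using A1 A2 M1' M2' by linarith
qed


lemma step_I:
  fixes z s :: "'a \<times> 'b" and \<mu> \<nu> C M g \<gamma> :: real
  assumes bddM: "bdd_above (MXY_set X Y L grad xs ys)" "bdd_above (MYX_set X Y L grad xs ys)"
    and bddI: "bdd_below (\<Union>y\<in>Y. int_sc_set (\<lambda>x. L (x, y)) (\<lambda>x. fst (grad (x, y))) X xs)"
              "bdd_below (\<Union>x\<in>X. int_sc_set (\<lambda>y. - L (x, y)) (\<lambda>y. - snd (grad (x, y))) Y ys)"
    and mu_def: "\<mu> = mu_int_L X Y L grad xs ys" and M_def: "M = M_L X Y L grad xs ys" and C_def: "C = C_L X Y L grad"
    and mu: "0 < \<mu>" "\<mu> \<le> 2 * C" and M0: "0 \<le> M" and Cp: "0 < C"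
    and nu_def: "\<nu> = 1 - M / sqrt \<mu>" and nu: "0 < \<nu>"
    and z: "z \<in> X \<times> Y" and s: "s \<in> X \<times> Y" and lmo: "\<forall>s'\<in>X \<times> Y. inner s (sp_r grad z) \<le> inner s' (sp_r grad z)"
    and g_def: "g = inner (z - s) (sp_r grad z)" and ga: "\<gamma> = min 1 (\<nu> / (2 * C) * g)"
  shows "sp_w L xs ys ((1 - \<gamma>) *\<^sub>R z + \<gamma> *\<^sub>R s) \<le> (1 - \<nu>\<^sup>2 / 2 * (\<mu> / C)) * sp_w L xs ys z"
proof -
  obtain x y where zz: "z = (x, y)" by (cases z)
  obtain sx sy where ss: "s = (sx, sy)" by (cases s)
  have xy: "x \<in> X" "y \<in> Y" "sx \<in> X" "sy \<in> Y" using z s zz ss by auto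
  have lx: "inner sx (fst (grad (x, y))) \<le> inner a (fst (grad (x, y)))" if "a \<in> X" for a
    using lmo[rule_format, of "(a, sy)"] that xy zz ss by (simp add: sp_r_def)
  have ly: "inner sy (- snd (grad (x, y))) \<le> inner b (- snd (grad (x, y)))" if "b \<in> Y" for b
    using lmo[rule_format, of "(sx, b)"] that xy zz ss by (simp add: sp_r_def)
  define gx where "gx = inner (x - sx) (fst (grad (x, y)))"
  define gy where "gy = inner (y - sy) (- snd (grad (x, y)))"
  have gx0: "0 \<le> gx" unfolding gx_def using lx[OF xy(1)] by (simp add: inner_diff_left)
  have gy0: "0 \<le> gy" unfolding gy_def using ly[OF xy(2)] by (simp add: inner_diff_left)
  have gsum: "g = gx + gy" unfolding g_def gx_def gy_def zz ss by (simp add: sp_r_def)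
  have muI1: "\<mu> \<le> (INF y\<in>Y. mu_int (\<lambda>x. L (x, y)) (\<lambda>x. fst (grad (x, y))) X xs)"
    unfolding mu_def mu_int_L_def by simp
  have muI2: "\<mu> \<le> (INF x\<in>X. mu_int (\<lambda>y. - L (x, y)) (\<lambda>y. - snd (grad (x, y))) Y ys)"
    unfolding mu_def mu_int_L_def by simp
  obtain c1 where c1: "0 \<le> c1" "c1 \<le> 1" "L (x, y) - L (xs, y) \<le> c1 * gx - c1\<^sup>2 * \<mu> / 2"
    using int_block_gen[where F="\<lambda>y x. L (x, y)" and dF="\<lambda>y x. fst (grad (x, y))" and P=Y and p=y and K=X
        and xc=xs and x=x and s=sx and m=\<mu>] bddI(1) xy X(3) saddle(1) lx muI1 unfolding gx_def by auto
  obtain c2 where c2: "0 \<le> c2" "c2 \<le> 1" "- L (x, y) - - L (x, ys) \<le> c2 * gy - c2\<^sup>2 * \<mu> / 2"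
    using int_block_gen[where F="\<lambda>x y. - L (x, y)" and dF="\<lambda>x y. - snd (grad (x, y))" and P=X and p=x and K=Y
        and xc=ys and x=y and s=sy and m=\<mu>] bddI(2) xy Y(3) saddle(2) ly muI2 unfolding gy_def by auto
  obtain c where c: "0 \<le> c" "c \<le> 1" "(L (x, y) - L (xs, y)) + (- L (x, y) - - L (x, ys)) \<le> c * (gx + gy) - c\<^sup>2 * \<mu> / 2"
    using combine_blocks[OF gx0 gy0 _ c1(1,2) c2(1,2) c1(3) c2(3)] mu by auto
  define w where "w = sp_w L xs ys z"
  have w_eq: "w = L (x, ys) - L (xs, y)" unfolding w_def sp_w_def zz by simp
  have wb: "w \<le> c * g - c\<^sup>2 * \<mu> / 2" using c(3) unfolding w_eq gsum by simp
  have "2 * \<mu> * w \<le> 2 * \<mu> * (c * g - c\<^sup>2 * \<mu> / 2)" by (rule mult_left_mono[OF wb]) (use mu in simp)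
  hence gw: "2 * \<mu> * w \<le> g\<^sup>2" using quad_gap[OF mu(1), of c g] by linarith
  have g0: "0 \<le> g" using gsum gx0 gy0 by simp
  have hx0: "0 \<le> L (x, ys) - L (xs, ys)" using saddle xy by auto
  have hy0: "0 \<le> L (xs, ys) - L (xs, y)" using saddle xy by auto
  have Sb: "(sqrt (L (x, ys) - L (xs, ys)) + sqrt (L (xs, ys) - L (xs, y))) * sqrt \<mu> \<le> g"
    by (rule S_bound[OF hx0 hy0 _ gw g0 mu(1)]) (simp add: w_eq)
  have gam: "0 \<le> \<gamma>" "\<gamma> \<le> 1" unfolding ga using nu Cp g0 by auto
  have zeq: "(1 - \<gamma>) *\<^sub>R z + \<gamma> *\<^sub>R s = z + \<gamma> *\<^sub>R (s - z)" by (simp add: algebra_simps)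
  have z'in: "(1 - \<gamma>) *\<^sub>R z + \<gamma> *\<^sub>R s \<in> X \<times> Y"
    using convexD_alt[OF convex_Times[OF X(2) Y(2)] z s gam] by (simp add: algebra_simps)
  have D: "sp_w L xs ys (z + \<gamma> *\<^sub>R (s - z)) \<le> w + \<gamma> * inner (s - z) (sp_r grad z)
          + \<gamma> * (M * (sqrt (L (x, ys) - L (xs, ys)) + sqrt (L (xs, ys) - L (xs, y)))) + \<gamma>\<^sup>2 * C"
    using descent[OF bddM z s z gam(1)] z'in zeq unfolding w_def M_def C_def zz by simp
  have sq: "0 < sqrt \<mu>" using mu by simp
  have MS: "M * (sqrt (L (x, ys) - L (xs, ys)) + sqrt (L (xs, ys) - L (xs, y))) \<le> M / sqrt \<mu> * g"
  proof -
    have "sqrt (L (x, ys) - L (xs, ys)) + sqrt (L (xs, ys) - L (xs, y)) \<le> g / sqrt \<mu>"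
      using Sb sq by (simp add: le_divide_eq)
    hence "M * (sqrt (L (x, ys) - L (xs, ys)) + sqrt (L (xs, ys) - L (xs, y))) \<le> M * (g / sqrt \<mu>)"
      using M0 by (metis mult_left_mono)
    thus ?thesis by simp
  qed
  have "\<gamma> * (M * (sqrt (L (x, ys) - L (xs, ys)) + sqrt (L (xs, ys) - L (xs, y)))) \<le> \<gamma> * (M / sqrt \<mu> * g)"
    using mult_left_mono[OF MS gam(1)] .
  moreover have "inner (s - z) (sp_r grad z) = - g" unfolding g_def by (simp add: inner_diff_left)
  moreover have "- \<gamma> * g + \<gamma> * (M / sqrt \<mu> * g) = - \<nu> * \<gamma> * g" unfolding nu_def by (simp add: algebra_simps)
  ultimately have st: "sp_w L xs ys ((1 - \<gamma>) *\<^sub>R z + \<gamma> *\<^sub>R s) \<le> w - \<nu> * \<gamma> * g + \<gamma>\<^sup>2 * C"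
    using D zeq by simp
  show ?thesis
  proof (cases "\<nu> / (2 * C) * g \<le> 1")
    case True
    hence "\<gamma> = \<nu> / (2 * C) * g" unfolding ga by simp
    from rate_a[OF Cp st this gw] show ?thesis unfolding w_def .
  next
    case False
    hence g1: "\<gamma> = 1" unfolding ga by simp
    have big: "2 * C \<le> \<nu> * g" using False Cp by (simp add: field_simps)
    have nu1: "\<nu> \<le> 1" unfolding nu_def using M0 sq by simp
    have "sp_w L xs ys ((1 - \<gamma>) *\<^sub>R z + \<gamma> *\<^sub>R s) \<le> w - \<nu> * g + C" using st g1 by simp
    from rate_b[OF Cp nu nu1 less_imp_le[OF mu(1)] mu(2) c(1,2) wb big this] show ?thesis unfolding w_def .
  qed
qed


lemma mu_I_bounds:
  assumes bddM: "bdd_above (MXY_set X Y L grad xs ys)" "bdd_above (MYX_set X Y L grad xs ys)"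
    and bddI: "bdd_below (\<Union>y\<in>Y. int_sc_set (\<lambda>x. L (x, y)) (\<lambda>x. fst (grad (x, y))) X xs)"
              "bdd_below (\<Union>x\<in>X. int_sc_set (\<lambda>y. - L (x, y)) (\<lambda>y. - snd (grad (x, y))) Y ys)"
    and ns: "(\<exists>x\<in>X. x \<noteq> xs) \<or> (\<exists>y\<in>Y. y \<noteq> ys)"
  shows "mu_int_L X Y L grad xs ys \<le> 2 * C_L X Y L grad" "0 \<le> M_L X Y L grad xs ys"
proof -
  have "mu_int_L X Y L grad xs ys \<le> Cx + Cy \<and> 0 \<le> M_L X Y L grad xs ys"
  proof (cases "\<exists>x\<in>X. x \<noteq> xs")
    case True
    then obtain x0 where x0: "x0 \<in> X" "x0 \<noteq> xs" by blast
    have "(INF y\<in>Y. mu_int (\<lambda>x. L (x, y)) (\<lambda>x. fst (grad (x, y))) X xs) \<le> Cx"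
      unfolding Cx_def
      by (rule mu_le_curv_gen[where F="\<lambda>y x. L (x, y)" and dF="\<lambda>y x. fst (grad (x, y))" and p=ys and x=x0])
         (use bddI(1) curv_fin(1) saddle X(3) x0 in auto)
    hence "mu_int_L X Y L grad xs ys \<le> Cx" unfolding mu_int_L_def by linarith
    moreover have "0 \<le> Sup (MYX_set X Y L grad xs ys)"
    proof -
      have "inner (ys - ys) ((snd (grad (x0, ys)) - snd (grad (xs, ys))) /\<^sub>R sqrt (L (x0, ys) - L (xs, ys))) \<in> MYX_set X Y L grad xs ys"
        unfolding MYX_set_def using x0 saddle by blast
      thus ?thesis using bddM(2) by (metis cSup_upper diff_self inner_zero_left)
    qed
    ultimately show ?thesis using Cy_nonneg unfolding M_L_def by simp
  next
    case False
    then obtain y0 where y0: "y0 \<in> Y" "y0 \<noteq> ys" using ns by blast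
    have "(INF x\<in>X. mu_int (\<lambda>y. - L (x, y)) (\<lambda>y. - snd (grad (x, y))) Y ys) \<le> Cy"
      unfolding Cy_def
      by (rule mu_le_curv_gen[where F="\<lambda>x y. - L (x, y)" and dF="\<lambda>x y. - snd (grad (x, y))" and p=xs and x=y0])
         (use bddI(2) curv_fin(2) saddle Y(3) y0 in auto)
    hence "mu_int_L X Y L grad xs ys \<le> Cy" unfolding mu_int_L_def by linarith
    moreover have "0 \<le> Sup (MXY_set X Y L grad xs ys)"
    proof -
      have "inner (xs - xs) ((fst (grad (xs, ys)) - fst (grad (xs, y0))) /\<^sub>R sqrt (L (xs, ys) - L (xs, y0))) \<in> MXY_set X Y L grad xs ys"
        unfolding MXY_set_def using y0 saddle by blast
      thus ?thesis using bddM(1) by (metis cSup_upper diff_self inner_zero_left)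
    qed
    ultimately show ?thesis using Cx_nonneg unfolding M_L_def by simp
  qed
  thus "mu_int_L X Y L grad xs ys \<le> 2 * C_L X Y L grad" "0 \<le> M_L X Y L grad xs ys" unfolding CL_eq by auto
qed


lemma part_I:
  fixes z s :: "nat \<Rightarrow> 'a \<times> 'b" and \<mu> \<nu> C :: real
  assumes bddM: "bdd_above (MXY_set X Y L grad xs ys)" "bdd_above (MYX_set X Y L grad xs ys)"
    and bddI: "bdd_below (\<Union>y\<in>Y. int_sc_set (\<lambda>x. L (x, y)) (\<lambda>x. fst (grad (x, y))) X xs)"
              "bdd_below (\<Union>x\<in>X. int_sc_set (\<lambda>y. - L (x, y)) (\<lambda>y. - snd (grad (x, y))) Y ys)"
    and mu_def: "\<mu> = mu_int_L X Y L grad xs ys" and C_def: "C = C_L X Y L grad"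
    and mu: "0 < \<mu>" and nu_def: "\<nu> = 1 - M_L X Y L grad xs ys / sqrt \<mu>" and nu: "0 < \<nu>"
    and run: "spfw_run X Y grad \<nu> C z s"
  shows "sp_w L xs ys (z (Suc t)) \<le> (1 - \<nu>\<^sup>2 / 2 * (\<mu> / C)) * sp_w L xs ys (z t)"
proof -
  have z0: "z 0 \<in> X \<times> Y" using run unfolding spfw_run_def by simp
  have R: "s t \<in> X \<times> Y \<and> (\<forall>s'\<in>X \<times> Y. inner (s t) (sp_r grad (z t)) \<le> inner s' (sp_r grad (z t))) \<and>
           z (Suc t) = (1 - min 1 (\<nu> / (2 * C) * inner (z t - s t) (sp_r grad (z t)))) *\<^sub>R z t
                       + min 1 (\<nu> / (2 * C) * inner (z t - s t) (sp_r grad (z t))) *\<^sub>R s t" for t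
    using run unfolding spfw_run_def Let_def by blast
  have C0: "0 \<le> C" unfolding C_def CL_eq using Cx_nonneg Cy_nonneg by simp
  have zin: "z t \<in> X \<times> Y" for t
  proof (induction t)
    case 0 thus ?case using z0 .
  next
    case (Suc t)
    let ?g = "inner (z t - s t) (sp_r grad (z t))"
    have "0 \<le> ?g" using R[of t] Suc by (auto simp: inner_diff_left)
    hence gam: "0 \<le> min 1 (\<nu> / (2 * C) * ?g)" "min 1 (\<nu> / (2 * C) * ?g) \<le> 1" using nu C0 by auto
    have "(1 - min 1 (\<nu> / (2 * C) * ?g)) *\<^sub>R z t + min 1 (\<nu> / (2 * C) * ?g) *\<^sub>R s t \<in> X \<times> Y"
      by (intro convexD[OF convex_Times[OF X(2) Y(2)]]) (use R[of t] Suc gam in auto)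
    thus ?case using R[of t] by simp
  qed
  show ?thesis
  proof (cases "(\<exists>x\<in>X. x \<noteq> xs) \<or> (\<exists>y\<in>Y. y \<noteq> ys)")
    case True
    note B = mu_I_bounds[OF bddM bddI True]
    have Cp: "0 < C" using B(1) mu unfolding mu_def C_def by simp
    show ?thesis
      using R[of t] step_I[OF bddM bddI mu_def refl C_def mu B(1)[folded mu_def C_def] B(2) Cp nu_def nu zin[of t] _ _ refl refl]
      by simp
  next
    case False
    hence "z t = (xs, ys)" "z (Suc t) = (xs, ys)" using zin[of t] zin[of "Suc t"] by (auto simp: prod_eq_iff mem_Times_iff)
    thus ?thesis by (simp add: sp_w_def)
  qed
qed


lemma tangent_x:
  assumes x: "x \<in> X" "x' \<in> X" and y: "y \<in> Y"
  shows "L (x, y) + inner (x' - x) (fst (grad (x, y))) \<le> L (x', y)"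
proof -
  obtain \<mu>X where mu: "\<mu>X > 0" "sconvex_on \<mu>X X (\<lambda>x. L (x, y))" using sc y by blast
  let ?f = "\<lambda>t::real. L ((x, y) + t *\<^sub>R (x' - x, 0))"
  have dL: "(L has_derivative (\<lambda>h. inner (grad (x, y)) h)) (at ((x, y) + 0 *\<^sub>R (x' - x, 0)))"
    using diff x y by simp
  have "(?f has_derivative (\<lambda>h. inner (grad (x, y)) (h *\<^sub>R (x' - x, 0)))) (at 0)"
    by (rule has_derivative_compose[where f="\<lambda>t. (x, y) + t *\<^sub>R (x' - x, 0)" and f'="\<lambda>h. h *\<^sub>R (x' - x, 0)", OF _ dL])
       (auto intro!: derivative_eq_intros)
  moreover have "(\<lambda>h. inner (grad (x, y)) (h *\<^sub>R (x' - x, 0))) = (*) (inner (x' - x) (fst (grad (x, y))))"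
    by (rule ext) (simp add: inner_prod_def inner_commute)
  ultimately have "(?f has_field_derivative inner (x' - x) (fst (grad (x, y)))) (at 0)"
    unfolding has_field_derivative_def by simp
  moreover have "?f t \<le> (1 - t) * ?f 0 + t * ?f 1" if "0 < t" "t < 1" for t
  proof -
    have e: "(x, y) + t *\<^sub>R (x' - x, 0) = ((1 - t) *\<^sub>R x + t *\<^sub>R x', y)" by (simp add: algebra_simps)
    have "L ((1 - t) *\<^sub>R x + t *\<^sub>R x', y) \<le> (1 - t) * L (x, y) + t * L (x', y) - \<mu>X / 2 * t * (1 - t) * (norm (x - x'))\<^sup>2"
      using mu(2) x that unfolding sconvex_on_def by auto
    moreover have "0 \<le> \<mu>X / 2 * t * (1 - t) * (norm (x - x'))\<^sup>2" using mu that by simp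
    ultimately show ?thesis unfolding e by simp
  qed
  ultimately have "inner (x' - x) (fst (grad (x, y))) \<le> ?f 1 - ?f 0" by (rule tangent_gen)
  thus ?thesis by simp
qed

lemma tangent_y:
  assumes x: "x \<in> X" and y: "y \<in> Y" "y' \<in> Y"
  shows "- L (x, y) + inner (y' - y) (- snd (grad (x, y))) \<le> - L (x, y')"
proof -
  obtain \<mu>Y where mu: "\<mu>Y > 0" "sconvex_on \<mu>Y Y (\<lambda>y. - L (x, y))" using sc x by blast
  let ?f = "\<lambda>t::real. - L ((x, y) + t *\<^sub>R (0, y' - y))"
  have dL: "(L has_derivative (\<lambda>h. inner (grad (x, y)) h)) (at ((x, y) + 0 *\<^sub>R (0, y' - y)))"
    using diff x y by simp
  have "(?f has_derivative (\<lambda>h. - inner (grad (x, y)) (h *\<^sub>R (0, y' - y)))) (at 0)"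
    by (rule has_derivative_minus[OF has_derivative_compose[where f="\<lambda>t. (x, y) + t *\<^sub>R (0, y' - y)" and f'="\<lambda>h. h *\<^sub>R (0, y' - y)", OF _ dL]])
       (auto intro!: derivative_eq_intros)
  moreover have "(\<lambda>h. - inner (grad (x, y)) (h *\<^sub>R (0, y' - y))) = (*) (inner (y' - y) (- snd (grad (x, y))))"
    by (rule ext) (simp add: inner_prod_def inner_commute)
  ultimately have "(?f has_field_derivative inner (y' - y) (- snd (grad (x, y)))) (at 0)"
    unfolding has_field_derivative_def by simp
  moreover have "?f t \<le> (1 - t) * ?f 0 + t * ?f 1" if "0 < t" "t < 1" for t
  proof -
    have e: "(x, y) + t *\<^sub>R (0, y' - y) = (x, (1 - t) *\<^sub>R y + t *\<^sub>R y')" by (simp add: algebra_simps)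
    have "- L (x, (1 - t) *\<^sub>R y + t *\<^sub>R y') \<le> (1 - t) * - L (x, y) + t * - L (x, y') - \<mu>Y / 2 * t * (1 - t) * (norm (y - y'))\<^sup>2"
      using mu(2) y that unfolding sconvex_on_def by auto
    moreover have "0 \<le> \<mu>Y / 2 * t * (1 - t) * (norm (y - y'))\<^sup>2" using mu that by simp
    ultimately show ?thesis unfolding e by simp
  qed
  ultimately have "inner (y' - y) (- snd (grad (x, y))) \<le> ?f 1 - ?f 0" by (rule tangent_gen)
  thus ?thesis by simp
qed


lemma step_P:
  fixes x :: 'a and y :: 'b and \<alpha>x :: "'a \<Rightarrow> real" and \<alpha>y :: "'b \<Rightarrow> real"
    and s v z' :: "'a \<times> 'b" and \<mu> \<nu> C M \<gamma> :: real
  assumes A: "finite A" "X = convex hull A" and B: "finite B" "Y = convex hull B"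
    and bddM: "bdd_above (MXY_set X Y L grad xs ys)" "bdd_above (MYX_set X Y L grad xs ys)"
    and bddG: "bdd_below (\<Union>y\<in>Y. geo_sc_set (\<lambda>x. L (x, y)) (\<lambda>x. fst (grad (x, y))) A)"
              "bdd_below (\<Union>x\<in>X. geo_sc_set (\<lambda>y. - L (x, y)) (\<lambda>y. - snd (grad (x, y))) B)"
    and mu_def: "\<mu> = mu_geo_L A B L grad" and M_def: "M = M_L X Y L grad xs ys" and C_def: "C = C_L X Y L grad"
    and mu: "0 < \<mu>" "\<mu> \<le> 2 * C" and M0: "0 \<le> M" and Cp: "0 < C"
    and nu_def: "\<nu> = 1 / 2 - M / sqrt \<mu>" and nu: "0 < \<nu>"
    and wx: "wvalid A \<alpha>x x" and wy: "wvalid B \<alpha>y y"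
    and s: "s \<in> A \<times> B" and lmo: "\<forall>s'\<in>(convex hull A) \<times> (convex hull B). inner s (sp_r grad (x, y)) \<le> inner s' (sp_r grad (x, y))"
    and v: "v \<in> {a\<in>A. 0 < \<alpha>x a} \<times> {b\<in>B. 0 < \<alpha>y b}"
    and vmax: "\<forall>v'\<in>{a\<in>A. 0 < \<alpha>x a} \<times> {b\<in>B. 0 < \<alpha>y b}. inner (sp_r grad (x, y)) v' \<le> inner (sp_r grad (x, y)) v"
    and ga: "0 \<le> \<gamma>" "\<gamma> \<le> \<nu> / (2 * C) * inner (- sp_r grad (x, y)) ((s - (x, y)) + ((x, y) - v))"
    and z'_def: "z' = (x, y) + \<gamma> *\<^sub>R (if inner (- sp_r grad (x, y)) (s - (x, y)) \<ge> inner (- sp_r grad (x, y)) ((x, y) - v)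
                                       then s - (x, y) else (x, y) - v)"
    and z'in: "z' \<in> X \<times> Y"
  shows "(\<gamma> = \<nu> / (2 * C) * inner (- sp_r grad (x, y)) ((s - (x, y)) + ((x, y) - v)) \<or> 1 \<le> \<gamma>)
           \<longrightarrow> sp_w L xs ys z' \<le> (1 - \<nu>\<^sup>2 / 2 * (\<mu> / C)) * sp_w L xs ys (x, y)"
    and "sp_w L xs ys z' \<le> sp_w L xs ys (x, y)"
proof -
  let ?r = "sp_r grad (x, y)"
  let ?gx = "fst (grad (x, y))" and ?gy = "- snd (grad (x, y))"
  obtain sx sy where ss: "s = (sx, sy)" by (cases s)
  obtain vx vy where vv: "v = (vx, vy)" by (cases v)
  have xX: "x \<in> X" using wv_hull[OF A(1) wx] A(2) by simp
  have yY: "y \<in> Y" using wv_hull[OF B(1) wy] B(2) by simp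
  have sxA: "sx \<in> A" and syB: "sy \<in> B" using s ss by auto
  have vxS: "vx \<in> {a\<in>A. 0 < \<alpha>x a}" and vyS: "vy \<in> {b\<in>B. 0 < \<alpha>y b}" using v vv by auto
  have sX: "s \<in> X \<times> Y" using s ss A(2) B(2) by (auto intro: hull_inc)
  have vX: "v \<in> X \<times> Y" using vxS vyS vv A(2) B(2) by (auto intro: hull_inc)
  have lx: "inner ?gx sx \<le> inner ?gx a" if "a \<in> A" for a
    using lmo[rule_format, of "(a, sy)"] that syB ss by (simp add: sp_r_def inner_commute hull_inc)
  have ly: "inner ?gy sy \<le> inner ?gy b" if "b \<in> B" for b
    using lmo[rule_format, of "(sx, b)"] that sxA ss by (simp add: sp_r_def inner_commute hull_inc)
  have mxx: "\<forall>a\<in>{a\<in>A. 0 < \<alpha>x a}. inner ?gx a \<le> inner ?gx vx"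
    using vmax vyS vv by (force simp: sp_r_def)
  have mxy: "\<forall>b\<in>{b\<in>B. 0 < \<alpha>y b}. inner ?gy b \<le> inner ?gy vy"
    using vmax vxS vv by (force simp: sp_r_def)
  define gx where "gx = inner ?gx (vx - sx)"
  define gy where "gy = inner ?gy (vy - sy)"
  define gP where "gP = inner (- ?r) ((s - (x, y)) + ((x, y) - v))"
  have gP_eq: "gP = gx + gy" unfolding gP_def gx_def gy_def ss vv by (simp add: sp_r_def inner_diff_right)
  have gx0: "0 \<le> gx" unfolding gx_def using lx[of vx] vxS by (simp add: inner_diff_right)
  have gy0: "0 \<le> gy" unfolding gy_def using ly[of vy] vyS by (simp add: inner_diff_right)
  have muG1: "\<mu> \<le> (INF y\<in>convex hull B. mu_geo (\<lambda>x. L (x, y)) (\<lambda>x. fst (grad (x, y))) A)"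
    unfolding mu_def mu_geo_L_def by simp
  have muG2: "\<mu> \<le> (INF x\<in>convex hull A. mu_geo (\<lambda>y. - L (x, y)) (\<lambda>y. - snd (grad (x, y))) B)"
    unfolding mu_def mu_geo_L_def by simp
  obtain c1 where c1: "0 \<le> c1" "c1 \<le> 1" "L (x, y) - L (xs, y) \<le> c1 * gx - c1\<^sup>2 * \<mu> / 2"
    using geo_block_gen[where F="\<lambda>y x. L (x, y)" and dF="\<lambda>y x. fst (grad (x, y))" and P="convex hull B" and p=y
        and A=A and x=x and xc=xs and m=\<mu> and S="{a\<in>A. 0 < \<alpha>x a}" and vv=vx and ss=sx]
      A(1) bddG(1) B(2) yY A(2) xX saddle(1) muG1 tangent_x[OF xX saddle(1) yY] wv_supp[OF A(1) wx] vxS mxx lx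
    unfolding gx_def by auto
  obtain c2 where c2: "0 \<le> c2" "c2 \<le> 1" "- L (x, y) - - L (x, ys) \<le> c2 * gy - c2\<^sup>2 * \<mu> / 2"
    using geo_block_gen[where F="\<lambda>x y. - L (x, y)" and dF="\<lambda>x y. - snd (grad (x, y))" and P="convex hull A" and p=x
        and A=B and x=y and xc=ys and m=\<mu> and S="{b\<in>B. 0 < \<alpha>y b}" and vv=vy and ss=sy]
      B(1) bddG(2) A(2) xX B(2) yY saddle(2) muG2 tangent_y[OF xX yY saddle(2)] wv_supp[OF B(1) wy] vyS mxy ly
    unfolding gy_def by auto
  obtain c where c: "0 \<le> c" "c \<le> 1" "(L (x, y) - L (xs, y)) + (- L (x, y) - - L (x, ys)) \<le> c * (gx + gy) - c\<^sup>2 * \<mu> / 2"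
    using combine_blocks[OF gx0 gy0 _ c1(1,2) c2(1,2) c1(3) c2(3)] mu by auto
  define w where "w = sp_w L xs ys (x, y)"
  have w_eq: "w = L (x, ys) - L (xs, y)" unfolding w_def sp_w_def by simp
  have wb: "w \<le> c * gP - c\<^sup>2 * \<mu> / 2" using c(3) unfolding w_eq gP_eq by simp
  have "2 * \<mu> * w \<le> 2 * \<mu> * (c * gP - c\<^sup>2 * \<mu> / 2)" by (rule mult_left_mono[OF wb]) (use mu in simp)
  hence gw: "2 * \<mu> * w \<le> gP\<^sup>2" using quad_gap[OF mu(1), of c gP] by linarith
  have g0: "0 \<le> gP" using gP_eq gx0 gy0 by simp
  have hx0: "0 \<le> L (x, ys) - L (xs, ys)" using saddle xX yY by auto
  have hy0: "0 \<le> L (xs, ys) - L (xs, y)" using saddle xX yY by auto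
  have Sb: "(sqrt (L (x, ys) - L (xs, ys)) + sqrt (L (xs, ys) - L (xs, y))) * sqrt \<mu> \<le> gP"
    by (rule S_bound[OF hx0 hy0 _ gw g0 mu(1)]) (simp add: w_eq)
  define isFW where "isFW = (inner (- ?r) (s - (x, y)) \<ge> inner (- ?r) ((x, y) - v))"
  define p where "p = (if isFW then s else (x, y))"
  define q where "q = (if isFW then (x, y) else v)"
  define gh where "gh = inner (- ?r) (p - q)"
  have pq: "p \<in> X \<times> Y" "q \<in> X \<times> Y" unfolding p_def q_def using sX vX xX yY by auto
  have z'eq: "z' = (x, y) + \<gamma> *\<^sub>R (p - q)" unfolding z'_def p_def q_def isFW_def by simp
  have split: "gP = inner (- ?r) (s - (x, y)) + inner (- ?r) ((x, y) - v)" unfolding gP_def by (rule inner_add_right)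
  have gh2: "gP \<le> 2 * gh"
  proof (cases isFW)
    case True thus ?thesis unfolding split gh_def p_def q_def isFW_def by simp
  next
    case False thus ?thesis unfolding split gh_def p_def q_def isFW_def by simp
  qed
  have D: "sp_w L xs ys z' \<le> w + \<gamma> * inner (p - q) ?r
          + \<gamma> * (M * (sqrt (L (x, ys) - L (xs, ys)) + sqrt (L (xs, ys) - L (xs, y)))) + \<gamma>\<^sup>2 * C"
    using descent[OF bddM _ pq(1) pq(2) ga(1), of "(x, y)"] z'in z'eq xX yY unfolding w_def M_def C_def by simp
  have sq: "0 < sqrt \<mu>" using mu by simp
  have MS: "M * (sqrt (L (x, ys) - L (xs, ys)) + sqrt (L (xs, ys) - L (xs, y))) \<le> M / sqrt \<mu> * gP"
  proof -
    have "sqrt (L (x, ys) - L (xs, ys)) + sqrt (L (xs, ys) - L (xs, y)) \<le> gP / sqrt \<mu>"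
      using Sb sq by (simp add: le_divide_eq)
    hence "M * (sqrt (L (x, ys) - L (xs, ys)) + sqrt (L (xs, ys) - L (xs, y))) \<le> M * (gP / sqrt \<mu>)"
      using M0 by (metis mult_left_mono)
    thus ?thesis by simp
  qed
  have "\<gamma> * (M * (sqrt (L (x, ys) - L (xs, ys)) + sqrt (L (xs, ys) - L (xs, y)))) \<le> \<gamma> * (M / sqrt \<mu> * gP)"
    using mult_left_mono[OF MS ga(1)] .
  moreover have "\<gamma> * inner (p - q) ?r = - \<gamma> * gh" unfolding gh_def by (simp add: inner_commute)
  moreover have "- \<gamma> * gh + \<gamma> * (M / sqrt \<mu> * gP) \<le> - \<nu> * \<gamma> * gP"
  proof -
    define k where "k = M / sqrt \<mu>"
    have nuk: "\<nu> = 1 / 2 - k" unfolding nu_def k_def ..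
    have k0: "0 \<le> k" unfolding k_def using M0 sq by simp
    have k: "0 \<le> 1 - 2 * k" using nu unfolding nuk by simp
    have a: "\<gamma> * (1 - 2 * k) * (gP / 2) \<le> \<gamma> * (1 - 2 * k) * gh"
      using gh2 k ga(1) by (intro mult_left_mono) auto
    have b: "0 \<le> \<gamma> * k * (gh - gP / 2)" using ga(1) k0 gh2 by simp
    have e1: "- \<nu> * \<gamma> * gP = - (\<gamma> * (1 - 2 * k) * (gP / 2))" unfolding nuk by (simp add: algebra_simps)
    have e2: "- \<gamma> * gh + \<gamma> * (k * gP) = - (\<gamma> * (1 - 2 * k) * gh) - 2 * (\<gamma> * k * (gh - gP / 2))"
      by (simp add: algebra_simps)
    show ?thesis unfolding k_def[symmetric] e1 e2 using a b by linarith
  qed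
  ultimately have st: "sp_w L xs ys z' \<le> w - \<nu> * \<gamma> * gP + \<gamma>\<^sup>2 * C" using D by linarith
  have nu2: "\<nu> \<le> 1 / 2" unfolding nu_def using M0 sq by simp
  show "sp_w L xs ys z' \<le> sp_w L xs ys (x, y)"
    using rate_drop[OF Cp ga(1) ga(2)[folded gP_def] less_imp_le[OF nu] g0 st] unfolding w_def .
  show "(\<gamma> = \<nu> / (2 * C) * inner (- sp_r grad (x, y)) ((s - (x, y)) + ((x, y) - v)) \<or> 1 \<le> \<gamma>)
           \<longrightarrow> sp_w L xs ys z' \<le> (1 - \<nu>\<^sup>2 / 2 * (\<mu> / C)) * sp_w L xs ys (x, y)"
  proof
    assume h: "\<gamma> = \<nu> / (2 * C) * inner (- sp_r grad (x, y)) ((s - (x, y)) + ((x, y) - v)) \<or> 1 \<le> \<gamma>"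
    show "sp_w L xs ys z' \<le> (1 - \<nu>\<^sup>2 / 2 * (\<mu> / C)) * sp_w L xs ys (x, y)"
    proof (cases "\<gamma> = \<nu> / (2 * C) * gP")
      case True
      from rate_a[OF Cp st True gw] show ?thesis unfolding w_def .
    next
      case False
      hence "1 \<le> \<gamma>" using h unfolding gP_def by auto
      from rate_c[OF Cp nu nu2 less_imp_le[OF mu(1)] mu(2) c(1,2) wb this ga(2)[folded gP_def] g0 st]
      show ?thesis unfolding w_def .
    qed
  qed
qed


lemma M_nonneg:
  assumes bddM: "bdd_above (MXY_set X Y L grad xs ys)" "bdd_above (MYX_set X Y L grad xs ys)"
    and ns: "(\<exists>x\<in>X. x \<noteq> xs) \<or> (\<exists>y\<in>Y. y \<noteq> ys)"
  shows "0 \<le> M_L X Y L grad xs ys"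
proof (cases "\<exists>x\<in>X. x \<noteq> xs")
  case True
  then obtain x0 where x0: "x0 \<in> X" "x0 \<noteq> xs" by blast
  have "inner (ys - ys) ((snd (grad (x0, ys)) - snd (grad (xs, ys))) /\<^sub>R sqrt (L (x0, ys) - L (xs, ys))) \<in> MYX_set X Y L grad xs ys"
    unfolding MYX_set_def using x0 saddle by blast
  hence "0 \<le> Sup (MYX_set X Y L grad xs ys)" using bddM(2) by (metis cSup_upper diff_self inner_zero_left)
  thus ?thesis unfolding M_L_def by simp
next
  case False
  then obtain y0 where y0: "y0 \<in> Y" "y0 \<noteq> ys" using ns by blast
  have "inner (xs - xs) ((fst (grad (xs, ys)) - fst (grad (xs, y0))) /\<^sub>R sqrt (L (xs, ys) - L (xs, y0))) \<in> MXY_set X Y L grad xs ys"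
    unfolding MXY_set_def using y0 saddle by blast
  hence "0 \<le> Sup (MXY_set X Y L grad xs ys)" using bddM(1) by (metis cSup_upper diff_self inner_zero_left)
  thus ?thesis unfolding M_L_def by simp
qed

lemma mu_P_bound:
  assumes A: "finite A" "X = convex hull A" and B: "finite B" "Y = convex hull B"
    and bddG: "bdd_below (\<Union>y\<in>Y. geo_sc_set (\<lambda>x. L (x, y)) (\<lambda>x. fst (grad (x, y))) A)"
              "bdd_below (\<Union>x\<in>X. geo_sc_set (\<lambda>y. - L (x, y)) (\<lambda>y. - snd (grad (x, y))) B)"
    and ns: "(\<exists>x\<in>X. x \<noteq> xs) \<or> (\<exists>y\<in>Y. y \<noteq> ys)"
  shows "mu_geo_L A B L grad \<le> 2 * C_L X Y L grad"
proof -
  have "mu_geo_L A B L grad \<le> Cx + Cy"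
  proof (cases "\<exists>x\<in>X. x \<noteq> xs")
    case True
    have "\<exists>a\<in>A. a \<noteq> xs"
    proof (rule ccontr)
      assume "\<not> ?thesis"
      hence "A \<subseteq> {xs}" by auto
      hence "convex hull A \<subseteq> {xs}" by (metis convex_hull_eq_empty convex_hull_singleton hull_mono subset_singletonD)
      thus False using True A(2) by auto
    qed
    then obtain a0 where a0: "a0 \<in> A" "a0 \<noteq> xs" by blast
    have a0X: "a0 \<in> X" using a0 A(2) by (simp add: hull_inc)
    have "L (a0, ys) + inner (xs - a0) (fst (grad (a0, ys))) \<le> L (xs, ys)" by (rule tangent_x[OF a0X saddle(1) saddle(2)])
    moreover have "L (xs, ys) < L (a0, ys)" by (rule hx_pos[OF a0X a0(2)])
    ultimately have neg: "inner (fst (grad (a0, ys))) (xs - a0) < 0" by (simp add: inner_commute)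
    have "(INF y\<in>convex hull B. mu_geo (\<lambda>x. L (x, y)) (\<lambda>x. fst (grad (x, y))) A)
          \<le> (SUP y\<in>convex hull B. curv (\<lambda>x. L (x, y)) (\<lambda>x. fst (grad (x, y))) (convex hull A))"
      by (rule mu_geo_le_curv_gen[where F="\<lambda>y x. L (x, y)" and dF="\<lambda>y x. fst (grad (x, y))" and p=ys and vert=a0 and xc=xs])
         (use A B bddG(1) curv_fin(1) saddle a0 neg in auto)
    moreover have "Cx = (SUP y\<in>convex hull B. curv (\<lambda>x. L (x, y)) (\<lambda>x. fst (grad (x, y))) (convex hull A))"
      unfolding Cx_def using A(2) B(2) by simp
    ultimately have "mu_geo_L A B L grad \<le> Cx" unfolding mu_geo_L_def by linarith
    thus ?thesis using Cy_nonneg by linarith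
  next
    case False
    then obtain y0 where "y0 \<in> Y" "y0 \<noteq> ys" using ns by blast
    have "\<exists>b\<in>B. b \<noteq> ys"
    proof (rule ccontr)
      assume "\<not> ?thesis"
      hence "B \<subseteq> {ys}" by auto
      hence "convex hull B \<subseteq> {ys}" by (metis convex_hull_eq_empty convex_hull_singleton hull_mono subset_singletonD)
      thus False using \<open>y0 \<in> Y\<close> \<open>y0 \<noteq> ys\<close> B(2) by auto
    qed
    then obtain b0 where b0: "b0 \<in> B" "b0 \<noteq> ys" by blast
    have b0Y: "b0 \<in> Y" using b0 B(2) by (simp add: hull_inc)
    have "- L (xs, b0) + inner (ys - b0) (- snd (grad (xs, b0))) \<le> - L (xs, ys)" by (rule tangent_y[OF saddle(1) b0Y saddle(2)])
    moreover have "L (xs, b0) < L (xs, ys)" by (rule hy_pos[OF b0Y b0(2)])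
    ultimately have neg: "inner (- snd (grad (xs, b0))) (ys - b0) < 0" by (simp add: inner_commute)
    have "(INF x\<in>convex hull A. mu_geo (\<lambda>y. - L (x, y)) (\<lambda>y. - snd (grad (x, y))) B)
          \<le> (SUP x\<in>convex hull A. curv (\<lambda>y. - L (x, y)) (\<lambda>y. - snd (grad (x, y))) (convex hull B))"
      by (rule mu_geo_le_curv_gen[where F="\<lambda>x y. - L (x, y)" and dF="\<lambda>x y. - snd (grad (x, y))" and p=xs and vert=b0 and xc=ys])
         (use A B bddG(2) curv_fin(2) saddle b0 neg in auto)
    moreover have "Cy = (SUP x\<in>convex hull A. curv (\<lambda>y. - L (x, y)) (\<lambda>y. - snd (grad (x, y))) (convex hull B))"
      unfolding Cy_def using A(2) B(2) by simp
    ultimately have "mu_geo_L A B L grad \<le> Cy" unfolding mu_geo_L_def by linarith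
    thus ?thesis using Cx_nonneg by linarith
  qed
  thus ?thesis unfolding CL_eq by simp
qed


lemma part_P:
  fixes A :: "'a set" and B :: "'b set" and z s v :: "nat \<Rightarrow> 'a \<times> 'b"
    and ax :: "nat \<Rightarrow> 'a \<Rightarrow> real" and ay :: "nat \<Rightarrow> 'b \<Rightarrow> real" and gam gmax :: "nat \<Rightarrow> real" and \<mu> \<nu> C :: real
  assumes A: "finite A" "X = convex hull A" and B: "finite B" "Y = convex hull B"
    and bddG: "bdd_below (\<Union>y\<in>Y. geo_sc_set (\<lambda>x. L (x, y)) (\<lambda>x. fst (grad (x, y))) A)"
              "bdd_below (\<Union>x\<in>X. geo_sc_set (\<lambda>y. - L (x, y)) (\<lambda>y. - snd (grad (x, y))) B)"
    and bddM: "bdd_above (MXY_set X Y L grad xs ys)" "bdd_above (MYX_set X Y L grad xs ys)"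
    and mu_def: "\<mu> = mu_geo_L A B L grad" and C_def: "C = C_L X Y L grad" and mu: "0 < \<mu>"
    and nu_def: "\<nu> = 1 / 2 - M_L X Y L grad xs ys / sqrt \<mu>" and nu: "0 < \<nu>"
    and run: "spafw_run A B grad \<nu> C z ax ay s v gam gmax"
  shows "\<forall>t. (gam t < gmax t \<or> gmax t \<ge> 1) \<longrightarrow> sp_w L xs ys (z (Suc t)) \<le> (1 - \<nu>\<^sup>2 / 2 * (\<mu> / C)) * sp_w L xs ys (z t)"
    and "\<forall>t. (gam t = gmax t \<and> gmax t < 1) \<longrightarrow> sp_w L xs ys (z (Suc t)) \<le> sp_w L xs ys (z t)"
    and "\<forall>T. real (card {t. t < T \<and> (gam t = gmax t \<and> gmax t < 1)}) \<le> 2 / 3 * real T"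
proof -
  define r where "r t = sp_r grad (z t)" for t
  define Sx where "Sx t = {a\<in>A. 0 < ax t a}" for t
  define Sy where "Sy t = {b\<in>B. 0 < ay t b}" for t
  define isFW where "isFW t = (inner (- r t) (s t - z t) \<ge> inner (- r t) (z t - v t))" for t
  define gP where "gP t = inner (- r t) ((s t - z t) + (z t - v t))" for t
  have R: "s t \<in> A \<times> B \<and> (\<forall>s'\<in>(convex hull A) \<times> (convex hull B). inner (s t) (r t) \<le> inner s' (r t)) \<and>
      v t \<in> Sx t \<times> Sy t \<and> (\<forall>v'\<in>Sx t \<times> Sy t. inner (r t) v' \<le> inner (r t) (v t)) \<and>
      gmax t = (if isFW t then 1 else real_of_ereal (min (away_ratio (ax t (fst (v t)))) (away_ratio (ay t (snd (v t)))))) \<and>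
      gam t = min (gmax t) (\<nu> / (2 * C) * gP t) \<and>
      z (Suc t) = z t + gam t *\<^sub>R (if isFW t then s t - z t else z t - v t) \<and>
      ax (Suc t) = (if isFW t then (\<lambda>a. (1 - gam t) * ax t a + (if a = fst (s t) then gam t else 0))
                    else (\<lambda>a. (1 + gam t) * ax t a - (if a = fst (v t) then gam t else 0))) \<and>
      ay (Suc t) = (if isFW t then (\<lambda>b. (1 - gam t) * ay t b + (if b = snd (s t) then gam t else 0))
                    else (\<lambda>b. (1 + gam t) * ay t b - (if b = snd (v t) then gam t else 0)))" for t
    using run unfolding spafw_run_def Let_def r_def[abs_def] Sx_def[abs_def] Sy_def[abs_def] isFW_def[abs_def] gP_def[abs_def]
    by blast
  have init0: "fst (z 0) \<in> A \<and> snd (z 0) \<in> B \<and> ax 0 = (\<lambda>a. if a = fst (z 0) then 1 else 0)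
    \<and> ay 0 = (\<lambda>b. if b = snd (z 0) then 1 else 0)"
    using run unfolding spafw_run_def by blast
  hence init: "fst (z 0) \<in> A" "snd (z 0) \<in> B" "ax 0 = (\<lambda>a. if a = fst (z 0) then 1 else 0)"
    "ay 0 = (\<lambda>b. if b = snd (z 0) then 1 else 0)" by auto
  have C0: "0 \<le> C" unfolding C_def CL_eq using Cx_nonneg Cy_nonneg by simp
  have stepfacts: "0 \<le> gP t \<and> 0 \<le> gam t \<and> 0 < ax t (fst (v t)) \<and> ax t (fst (v t)) \<le> 1 \<and> 0 < ay t (snd (v t)) \<and> ay t (snd (v t)) \<le> 1
        \<and> fst (v t) \<in> A \<and> snd (v t) \<in> B"
    if wx: "wvalid A (ax t) (fst (z t))" and wy: "wvalid B (ay t) (snd (z t))" for t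
  proof -
    have g: "0 \<le> inner (- r t) (s t - (fst (z t), snd (z t)))" "0 \<le> inner (- r t) ((fst (z t), snd (z t)) - v t)"
      using gap_nonneg[OF A(1) B(1) wx wy, of "s t" "r t" "v t"] R[of t] unfolding Sx_def Sy_def by auto
    have gs: "gP t = inner (- r t) (s t - z t) + inner (- r t) (z t - v t)" unfolding gP_def by (simp only: inner_add_right)
    have gp: "0 \<le> gP t" using g unfolding gs by simp
    have va: "0 < ax t (fst (v t))" "fst (v t) \<in> A" "0 < ay t (snd (v t))" "snd (v t) \<in> B"
      using R[of t] unfolding Sx_def Sy_def by (auto simp: mem_Times_iff)
    have vl: "ax t (fst (v t)) \<le> 1" "ay t (snd (v t)) \<le> 1" using wv_le1[OF A(1) wx] wv_le1[OF B(1) wy] by auto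
    have "0 \<le> gmax t" using R[of t] ar_nonneg[OF va(1) vl(1) va(3) vl(2)] by auto
    moreover have "0 \<le> \<nu> / (2 * C) * gP t" using nu C0 gp by simp
    ultimately have "0 \<le> gam t" using R[of t] by simp
    thus ?thesis using gp va vl by simp
  qed
  have Inv: "wvalid A (ax t) (fst (z t)) \<and> wvalid B (ay t) (snd (z t))" for t
  proof (induction t)
    case 0 show ?case using wv_init[OF A(1) init(1)] wv_init[OF B(1) init(2)] init(3,4) by simp
  next
    case (Suc t)
    hence wx: "wvalid A (ax t) (fst (z t))" and wy: "wvalid B (ay t) (snd (z t))" by auto
    note SF = stepfacts[OF wx wy]
    show ?case
    proof (cases "isFW t")
      case True
      have g1: "gam t \<le> 1" using R[of t] True by simp
      have sA: "fst (s t) \<in> A" "snd (s t) \<in> B" using R[of t] by (auto simp: mem_Times_iff)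
      have g0: "0 \<le> gam t" using SF by simp
      have axS: "ax (Suc t) = (\<lambda>a. (1 - gam t) * ax t a + (if a = fst (s t) then gam t else 0))"
        and ayS: "ay (Suc t) = (\<lambda>b. (1 - gam t) * ay t b + (if b = snd (s t) then gam t else 0))"
        and zS: "z (Suc t) = z t + gam t *\<^sub>R (s t - z t)" using R[of t] True by auto
      have "wvalid A (ax (Suc t)) (fst (z t) + gam t *\<^sub>R (fst (s t) - fst (z t)))"
        unfolding axS by (rule wv_fw[OF A(1) wx sA(1) g0 g1])
      moreover have "wvalid B (ay (Suc t)) (snd (z t) + gam t *\<^sub>R (snd (s t) - snd (z t)))"
        unfolding ayS by (rule wv_fw[OF B(1) wy sA(2) g0 g1])
      ultimately show ?thesis unfolding zS by simp
    next
      case False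
      let ?a = "ax t (fst (v t))" and ?b = "ay t (snd (v t))"
      have gm: "gam t \<le> real_of_ereal (min (away_ratio ?a) (away_ratio ?b))" using R[of t] False by simp
      have b1: "gam t \<le> ?a / (1 - ?a)" if "?a < 1"
        using gm ar_le1[of ?a ?b] SF that by linarith
      have b2: "gam t \<le> ?b / (1 - ?b)" if "?b < 1"
        using gm ar_le2[of ?a ?b] SF that by linarith
      have "wvalid A (ax (Suc t)) (fst (z t) + gam t *\<^sub>R (fst (z t) - fst (v t)))"
        using wv_away[OF A(1) wx, of "fst (v t)" "gam t"] SF b1 R[of t] False by simp
      moreover have "wvalid B (ay (Suc t)) (snd (z t) + gam t *\<^sub>R (snd (z t) - snd (v t)))"
        using wv_away[OF B(1) wy, of "snd (v t)" "gam t"] SF b2 R[of t] False by simp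
      ultimately show ?thesis using R[of t] False by simp
    qed
  qed
  have zin: "z t \<in> X \<times> Y" for t
    using Inv[of t] wv_hull[OF A(1)] wv_hull[OF B(1)] A(2) B(2) by (auto simp: mem_Times_iff)
  show "\<forall>T. real (card {t. t < T \<and> (gam t = gmax t \<and> gmax t < 1)}) \<le> 2 / 3 * real T"
  proof
    fix T :: nat
    define N where "N t = card (Sx t) + card (Sy t)" for t
    define D where "D T = card {t. t < T \<and> (gam t = gmax t \<and> gmax t < 1)}" for T
    have finx: "finite (Sx t)" for t unfolding Sx_def using A(1) by simp
    have finy: "finite (Sy t)" for t unfolding Sy_def using B(1) by simp
    have N2: "2 \<le> N t" for t
    proof -
      have "Sx t \<noteq> {}" "Sy t \<noteq> {}" using wv_ne Inv[of t] unfolding Sx_def Sy_def by blast+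
      hence "0 < card (Sx t)" "0 < card (Sy t)" using finx finy by (auto simp: card_gt_0_iff)
      thus ?thesis unfolding N_def by simp
    qed
    have Nstep: "N (Suc t) + (if gam t = gmax t \<and> gmax t < 1 then 3 else 0) \<le> N t + 2" for t
    proof -
      have wx: "wvalid A (ax t) (fst (z t))" and wy: "wvalid B (ay t) (snd (z t))" using Inv[of t] by auto
      note SF = stepfacts[OF wx wy]
      have nn: "\<forall>a. 0 \<le> ax t a" "\<forall>b. 0 \<le> ay t b" using wx wy unfolding wvalid_def by auto
      show ?thesis
      proof (cases "isFW t")
        case True
        have g1: "gam t \<le> 1" and gm: "gmax t = 1" using R[of t] True by auto
        have axS: "ax (Suc t) = (\<lambda>a. (1 - gam t) * ax t a + (if a = fst (s t) then gam t else 0))"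
          and ayS: "ay (Suc t) = (\<lambda>b. (1 - gam t) * ay t b + (if b = snd (s t) then gam t else 0))"
          using R[of t] True by auto
        have "Sx (Suc t) \<subseteq> insert (fst (s t)) (Sx t)" unfolding Sx_def axS
          using supp_fw[OF nn(1), of "gam t"] SF g1 by simp
        hence "card (Sx (Suc t)) \<le> card (insert (fst (s t)) (Sx t))" by (intro card_mono) (auto simp: finx)
        also have "\<dots> \<le> card (Sx t) + 1" using card_insert_le_m1 finx by (simp add: card_insert_if)
        finally have cx: "card (Sx (Suc t)) \<le> card (Sx t) + 1" .
        have "Sy (Suc t) \<subseteq> insert (snd (s t)) (Sy t)" unfolding Sy_def ayS
          using supp_fw[OF nn(2), of "gam t"] SF g1 by simp
        hence "card (Sy (Suc t)) \<le> card (insert (snd (s t)) (Sy t))" by (intro card_mono) (auto simp: finy)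
        also have "\<dots> \<le> card (Sy t) + 1" using finy by (simp add: card_insert_if)
        finally have cy: "card (Sy (Suc t)) \<le> card (Sy t) + 1" .
        show ?thesis using cx cy gm unfolding N_def by simp
      next
        case False
        let ?a = "ax t (fst (v t))" and ?b = "ay t (snd (v t))"
        have axS: "ax (Suc t) = (\<lambda>a. (1 + gam t) * ax t a - (if a = fst (v t) then gam t else 0))"
          and ayS: "ay (Suc t) = (\<lambda>b. (1 + gam t) * ay t b - (if b = snd (v t) then gam t else 0))"
          and gm: "gmax t = real_of_ereal (min (away_ratio ?a) (away_ratio ?b))"
          using R[of t] False by auto
        have sx: "Sx (Suc t) \<subseteq> Sx t" unfolding Sx_def axS using supp_away[OF nn(1), of "gam t" "fst (v t)" A] SF by simp
        have sy: "Sy (Suc t) \<subseteq> Sy t" unfolding Sy_def ayS using supp_away[OF nn(2), of "gam t" "snd (v t)" B] SF by simp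
        have cx: "card (Sx (Suc t)) \<le> card (Sx t)" using sx finx by (rule card_mono[rotated])
        have cy: "card (Sy (Suc t)) \<le> card (Sy t)" using sy finy by (rule card_mono[rotated])
        show ?thesis
        proof (cases "gam t = gmax t \<and> gmax t < 1")
          case False
          have "N (Suc t) \<le> N t" unfolding N_def using cx cy by simp
          moreover have "(if gam t = gmax t \<and> gmax t < 1 then 3 else 0) = (0::nat)" using False by (simp only: if_False)
          ultimately show ?thesis by linarith
        next
          case True
          have ab: "?a < 1 \<or> ?b < 1"
          proof (rule ccontr)
            assume "\<not> ?thesis"
            hence "?a = 1" "?b = 1" using SF by auto
            hence "fst (z t) = fst (v t)" "snd (z t) = snd (v t)"
              using wv_one[OF A(1) wx, of "fst (v t)"] wv_one[OF B(1) wy, of "snd (v t)"] SF by auto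
            hence "z t = v t" by (simp add: prod_eq_iff)
            moreover have "0 \<le> inner (- r t) (s t - (fst (z t), snd (z t)))"
              using gap_nonneg(1)[OF A(1) B(1) wx wy, of "s t" "r t" "v t"] R[of t] unfolding Sx_def Sy_def by auto
            ultimately have "isFW t" unfolding isFW_def by simp
            thus False using \<open>\<not> isFW t\<close> by simp
          qed
          have "Sx (Suc t) \<subseteq> Sx t - {fst (v t)} \<or> Sy (Suc t) \<subseteq> Sy t - {snd (v t)}"
          proof -
            have "(?a < 1 \<and> gmax t = ?a / (1 - ?a)) \<or> (?b < 1 \<and> gmax t = ?b / (1 - ?b))"
              unfolding gm by (rule ar_cases) (use SF ab in auto)
            thus ?thesis
            proof
              assume h: "?a < 1 \<and> gmax t = ?a / (1 - ?a)"
              hence "gam t = ?a / (1 - ?a)" using True by simp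
              hence "Sx (Suc t) \<subseteq> Sx t - {fst (v t)}" unfolding Sx_def axS
                using supp_drop[OF nn(1), of "fst (v t)" "gam t" A] SF h by simp
              thus ?thesis ..
            next
              assume h: "?b < 1 \<and> gmax t = ?b / (1 - ?b)"
              hence "gam t = ?b / (1 - ?b)" using True by simp
              hence "Sy (Suc t) \<subseteq> Sy t - {snd (v t)}" unfolding Sy_def ayS
                using supp_drop[OF nn(2), of "snd (v t)" "gam t" B] SF h by simp
              thus ?thesis ..
            qed
          qed
          moreover have "fst (v t) \<in> Sx t" "snd (v t) \<in> Sy t" using R[of t] by (auto simp: mem_Times_iff)
          ultimately have "card (Sx (Suc t)) + 1 \<le> card (Sx t) \<or> card (Sy (Suc t)) + 1 \<le> card (Sy t)"
          proof (elim disjE)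
            assume "Sx (Suc t) \<subseteq> Sx t - {fst (v t)}"
            hence "card (Sx (Suc t)) \<le> card (Sx t - {fst (v t)})" using finx by (intro card_mono) auto
            moreover have "card (Sx t - {fst (v t)}) = card (Sx t) - 1" using \<open>fst (v t) \<in> Sx t\<close> finx by simp
            moreover have "0 < card (Sx t)" using \<open>fst (v t) \<in> Sx t\<close> finx by (auto simp: card_gt_0_iff)
            ultimately show ?thesis by linarith
          next
            assume "Sy (Suc t) \<subseteq> Sy t - {snd (v t)}"
            hence "card (Sy (Suc t)) \<le> card (Sy t - {snd (v t)})" using finy by (intro card_mono) auto
            moreover have "card (Sy t - {snd (v t)}) = card (Sy t) - 1" using \<open>snd (v t) \<in> Sy t\<close> finy by simp
            moreover have "0 < card (Sy t)" using \<open>snd (v t) \<in> Sy t\<close> finy by (auto simp: card_gt_0_iff)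
            ultimately show ?thesis by linarith
          qed
          thus ?thesis using cx cy True unfolding N_def by auto
        qed
      qed
    qed
    have Phi: "N T + 3 * D T \<le> 2 + 2 * T" for T
    proof (induction T)
      case 0
      have "Sx 0 = {fst (z 0)}" "Sy 0 = {snd (z 0)}" unfolding Sx_def Sy_def using init by auto
      thus ?case unfolding N_def D_def by simp
    next
      case (Suc T)
      have "D (Suc T) = D T + (if gam T = gmax T \<and> gmax T < 1 then 1 else 0)"
        unfolding D_def by (rule card_less_Suc_filter)
      thus ?case using Suc Nstep[of T] by (auto split: if_splits)
    qed
    have "3 * D T \<le> 2 * T" using Phi[of T] N2[of T] by linarith
    hence "3 * real (D T) \<le> 2 * real T" by (metis of_nat_le_iff of_nat_mult of_nat_numeral)
    thus "real (card {t. t < T \<and> (gam t = gmax t \<and> gmax t < 1)}) \<le> 2 / 3 * real T" unfolding D_def by simp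
  qed
  have main: "((gam t < gmax t \<or> gmax t \<ge> 1) \<longrightarrow> sp_w L xs ys (z (Suc t)) \<le> (1 - \<nu>\<^sup>2 / 2 * (\<mu> / C)) * sp_w L xs ys (z t))
      \<and> sp_w L xs ys (z (Suc t)) \<le> sp_w L xs ys (z t)" for t
  proof (cases "(\<exists>x\<in>X. x \<noteq> xs) \<or> (\<exists>y\<in>Y. y \<noteq> ys)")
    case False
    hence "z t = (xs, ys)" "z (Suc t) = (xs, ys)" using zin[of t] zin[of "Suc t"] by (auto simp: prod_eq_iff mem_Times_iff)
    thus ?thesis by (simp add: sp_w_def)
  next
    case True
    have le2C: "\<mu> \<le> 2 * C" using mu_P_bound[OF A B bddG True] unfolding mu_def C_def .
    have M0: "0 \<le> M_L X Y L grad xs ys" by (rule M_nonneg[OF bddM True])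
    have Cp: "0 < C" using le2C mu by simp
    have wx: "wvalid A (ax t) (fst (z t))" and wy: "wvalid B (ay t) (snd (z t))" using Inv[of t] by auto
    note SF = stepfacts[OF wx wy]
    have sA: "s t \<in> A \<times> B" using R[of t] by simp
    have lmo: "\<forall>s'\<in>(convex hull A) \<times> (convex hull B). inner (s t) (sp_r grad (fst (z t), snd (z t))) \<le> inner s' (sp_r grad (fst (z t), snd (z t)))"
      using R[of t] unfolding r_def by simp
    have vin: "v t \<in> {a\<in>A. 0 < ax t a} \<times> {b\<in>B. 0 < ay t b}" using R[of t] unfolding Sx_def Sy_def by simp
    have vmax: "\<forall>v'\<in>{a\<in>A. 0 < ax t a} \<times> {b\<in>B. 0 < ay t b}. inner (sp_r grad (fst (z t), snd (z t))) v' \<le> inner (sp_r grad (fst (z t), snd (z t))) (v t)"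
      using R[of t] unfolding Sx_def Sy_def r_def by simp
    have g0: "0 \<le> gam t" using SF by simp
    have g1: "gam t \<le> \<nu> / (2 * C) * inner (- sp_r grad (fst (z t), snd (z t))) ((s t - (fst (z t), snd (z t))) + ((fst (z t), snd (z t)) - v t))"
      using R[of t] unfolding gP_def r_def by simp
    have zd: "z (Suc t) = (fst (z t), snd (z t)) + gam t *\<^sub>R (if inner (- sp_r grad (fst (z t), snd (z t))) (s t - (fst (z t), snd (z t))) \<ge> inner (- sp_r grad (fst (z t), snd (z t))) ((fst (z t), snd (z t)) - v t)
                                       then s t - (fst (z t), snd (z t)) else (fst (z t), snd (z t)) - v t)"
      using R[of t] unfolding isFW_def r_def by simp
    note SP = step_P[OF A B bddM bddG mu_def refl C_def mu le2C M0 Cp nu_def nu wx wy sA lmo vin vmax g0 g1 zd zin[of "Suc t"]]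
    have nd: "(gam t < gmax t \<or> gmax t \<ge> 1) \<longrightarrow> (gam t = \<nu> / (2 * C) * inner (- sp_r grad (fst (z t), snd (z t))) ((s t - (fst (z t), snd (z t))) + ((fst (z t), snd (z t)) - v t)) \<or> 1 \<le> gam t)"
      using R[of t] unfolding gP_def r_def by (auto simp: min_def)
    show ?thesis using SP nd unfolding prod.collapse by blast
  qed
  show "\<forall>t. (gam t < gmax t \<or> gmax t \<ge> 1) \<longrightarrow> sp_w L xs ys (z (Suc t)) \<le> (1 - \<nu>\<^sup>2 / 2 * (\<mu> / C)) * sp_w L xs ys (z t)"
    using main by blast
  show "\<forall>t. (gam t = gmax t \<and> gmax t < 1) \<longrightarrow> sp_w L xs ys (z (Suc t)) \<le> sp_w L xs ys (z t)"
    using main by blast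
qed

end

theorem lemma23:
  fixes X :: "'a::euclidean_space set" and Y :: "'b::euclidean_space set"
    and L :: "'a \<times> 'b \<Rightarrow> real" and grad :: "'a \<times> 'b \<Rightarrow> 'a \<times> 'b"
    and xs :: 'a and ys :: 'b
  assumes X: "X \<noteq> {}" "convex X" "compact X"
    and Y: "Y \<noteq> {}" "convex Y" "compact Y"
    and diff: "\<forall>z\<in>X \<times> Y. (L has_derivative (\<lambda>h. inner (grad z) h)) (at z)"
    and sc: "\<exists>\<mu>X \<mu>Y. \<mu>X > 0 \<and> \<mu>Y > 0 \<and> (\<forall>y\<in>Y. sconvex_on \<mu>X X (\<lambda>x. L (x, y)))
                                     \<and> (\<forall>x\<in>X. sconvex_on \<mu>Y Y (\<lambda>y. - L (x, y)))"
    and saddle: "xs \<in> X" "ys \<in> Y" "\<forall>x\<in>X. \<forall>y\<in>Y. L (xs, y) \<le> L (xs, ys) \<and> L (xs, ys) \<le> L (x, ys)"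
    and curv_fin: "bdd_above (\<Union>y\<in>Y. curv_set (\<lambda>x. L (x, y)) (\<lambda>x. fst (grad (x, y))) X)"
                  "bdd_above (\<Union>x\<in>X. curv_set (\<lambda>y. - L (x, y)) (\<lambda>y. - snd (grad (x, y))) Y)"
  shows
   "(\<forall>z s. let \<mu> = mu_int_L X Y L grad xs ys;
               \<nu> = 1 - M_L X Y L grad xs ys / sqrt \<mu>;
               C = C_L X Y L grad;
               \<rho> = \<nu>\<^sup>2 / 2 * (\<mu> / C)
           in (xs, ys) \<in> rel_interior (X \<times> Y)
              \<and> bdd_below (\<Union>y\<in>Y. int_sc_set (\<lambda>x. L (x, y)) (\<lambda>x. fst (grad (x, y))) X xs)
              \<and> bdd_below (\<Union>x\<in>X. int_sc_set (\<lambda>y. - L (x, y)) (\<lambda>y. - snd (grad (x, y))) Y ys)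
              \<and> \<mu> > 0
              \<and> bdd_above (MXY_set X Y L grad xs ys) \<and> bdd_above (MYX_set X Y L grad xs ys)
              \<and> \<nu> > 0
              \<and> spfw_run X Y grad \<nu> C z s
           \<longrightarrow> (\<forall>t. sp_w L xs ys (z (Suc t)) \<le> (1 - \<rho>) * sp_w L xs ys (z t)))
    \<and>
    (\<forall>A B z ax ay s v gam gmax. let \<mu> = mu_geo_L A B L grad;
               \<nu> = 1 / 2 - M_L X Y L grad xs ys / sqrt \<mu>;
               C = C_L X Y L grad;
               \<rho> = \<nu>\<^sup>2 / 2 * (\<mu> / C);
               drop = (\<lambda>t. gam t = gmax t \<and> gmax t < 1)
           in finite A \<and> finite B \<and> X = convex hull A \<and> Y = convex hull B
              \<and> bdd_below (\<Union>y\<in>Y. geo_sc_set (\<lambda>x. L (x, y)) (\<lambda>x. fst (grad (x, y))) A)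
              \<and> bdd_below (\<Union>x\<in>X. geo_sc_set (\<lambda>y. - L (x, y)) (\<lambda>y. - snd (grad (x, y))) B)
              \<and> \<mu> > 0
              \<and> bdd_above (MXY_set X Y L grad xs ys) \<and> bdd_above (MYX_set X Y L grad xs ys)
              \<and> \<nu> > 0
              \<and> spafw_run A B grad \<nu> C z ax ay s v gam gmax
           \<longrightarrow> (\<forall>t. (gam t < gmax t \<or> gmax t \<ge> 1) \<longrightarrow> sp_w L xs ys (z (Suc t)) \<le> (1 - \<rho>) * sp_w L xs ys (z t))
             \<and> (\<forall>t. drop t \<longrightarrow> sp_w L xs ys (z (Suc t)) \<le> sp_w L xs ys (z t))
             \<and> (\<forall>T. real (card {t. t < T \<and> drop t}) \<le> 2 / 3 * real T))"
proof -
  interpret spb X Y L grad xs ys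
    by (rule spb.intro) (use X Y diff sc saddle curv_fin in auto)
  show ?thesis
    unfolding Let_def
    apply (intro conjI allI impI)
    subgoal
      apply (elim conjE)
      apply (rule part_I)
      by (assumption | rule refl)+
    subgoal
      apply (elim conjE)
      apply (rule part_P(1)[rule_format])
      by (assumption | rule refl)+
    subgoal
      apply (elim conjE)
      apply (rule part_P(2)[rule_format])
      by (assumption | rule refl | rule conjI)+
    subgoal
      apply (elim conjE)
      apply (rule part_P(3)[rule_format])
      by (assumption | rule refl)+
    done
qed

end
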